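(* Consider the $(3+1)$-dimensional linear diffusion equation $U_t=U_{xx}+U_{yy}+U_{zz}$ for $U=U(x,y,z,t)$, and the nine linear differential operators (acting on differential functions of $x,y,z,t,U$ and the spatial derivatives of $U$, with $D_x,D_y,D_z$ the total derivatives) \[ R_1=2tD_x+x,\quad R_2=2tD_y+y,\quad R_3=2tD_z+z,\quad R_4=-xD_y+yD_x,\quad R_5=-xD_z+zD_x, \] \[ R_6=D_x,\quad R_7=-yD_z+zD_y,\quad R_8=D_y,\quad R_9=D_z . \] For an integer $n\ge 1$, let $\mathcal{S}_n$ be the real vector space spanned by the characteristics $R_{i_1}R_{i_2}\cdots R_{i_k}[U]$ with $0\le k\le n$ and $i_1,\dots,i_k\in\{1,\dots,9\}$ (the case $k=0$ being the characteristic $U$, and products meaning composition of operators). Then the number of linearly independent characteristics of generalized symmetries of order at most $n$ generated in this way, i.e. $\dim\mathcal{S}_n$, equals \[ N=\frac{(n+4)(n+3)^2(n+2)^2(n+1)}{144}. \] In particular $N=10,50,175,490$ for $n=1,2,3,4$.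
   Context: A generalized (evolutionary) symmetry of the equation is a vector field $Q\,\partial_U$ whose characteristic $Q$ satisfies $D_tQ=D_x^2Q+D_y^2Q+D_z^2Q$ on solutions; the operators $R_1,\dots,R_9$ map characteristics of linear generalized symmetries to characteristics of linear generalized symmetries (they are recursion operators, coming from the Lie point symmetries $2t\partial_x-xU\partial_U$, $2t\partial_y-yU\partial_U$, $2t\partial_z-zU\partial_U$, rotations and spatial translations). The order of a characteristic is the highest order of derivative of $U$ it involves. *)

theory Defs
  imports Complex_Main "HOL-Library.Function_Algebras"
begin

text \<open>A linear differential function with polynomial coefficients, i.e. a finite
  real combination of terms  x^a y^b z^c t^d U_{x^i y^j z^k}  (U_{x^i y^j z^k} the
  mixed spatial derivative of U), is encoded by its coefficient function:
  chr ((a,b,c,d),(i,j,k)) is the coefficient of  x^a y^b z^c t^d U_{x^i y^j z^k}.\<close>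

type_synonym mon = "nat \<times> nat \<times> nat \<times> nat"
type_synonym der = "nat \<times> nat \<times> nat"
type_synonym chr = "mon \<times> der \<Rightarrow> real"

definition U_chr :: chr where
  "U_chr = (\<lambda>m. if m = ((0,0,0,0),(0,0,0)) then 1 else 0)"

definition mulx :: "chr \<Rightarrow> chr" where
  "mulx f = (\<lambda>((a,b,c,d),e). if a > 0 then f ((a-1,b,c,d),e) else 0)"
definition muly :: "chr \<Rightarrow> chr" where
  "muly f = (\<lambda>((a,b,c,d),e). if b > 0 then f ((a,b-1,c,d),e) else 0)"
definition mulz :: "chr \<Rightarrow> chr" where
  "mulz f = (\<lambda>((a,b,c,d),e). if c > 0 then f ((a,b,c-1,d),e) else 0)"
definition mult :: "chr \<Rightarrow> chr" where
  "mult f = (\<lambda>((a,b,c,d),e). if d > 0 then f ((a,b,c,d-1),e) else 0)"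

text \<open>total derivatives: D_x (x^a.. U_(i,j,k)) = a x^(a-1).. U_(i,j,k) + x^a.. U_(i+1,j,k)\<close>
definition Dx :: "chr \<Rightarrow> chr" where
  "Dx f = (\<lambda>((a,b,c,d),(i,j,k)). real (a+1) * f ((a+1,b,c,d),(i,j,k))
      + (if i > 0 then f ((a,b,c,d),(i-1,j,k)) else 0))"
definition Dy :: "chr \<Rightarrow> chr" where
  "Dy f = (\<lambda>((a,b,c,d),(i,j,k)). real (b+1) * f ((a,b+1,c,d),(i,j,k))
      + (if j > 0 then f ((a,b,c,d),(i,j-1,k)) else 0))"
definition Dz :: "chr \<Rightarrow> chr" where
  "Dz f = (\<lambda>((a,b,c,d),(i,j,k)). real (c+1) * f ((a,b,c+1,d),(i,j,k))
      + (if k > 0 then f ((a,b,c,d),(i,j,k-1)) else 0))"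

definition R :: "nat \<Rightarrow> chr \<Rightarrow> chr" where
  "R i f = (if i = 1 then (\<lambda>m. 2 * mult (Dx f) m + mulx f m)
       else if i = 2 then (\<lambda>m. 2 * mult (Dy f) m + muly f m)
       else if i = 3 then (\<lambda>m. 2 * mult (Dz f) m + mulz f m)
       else if i = 4 then (\<lambda>m. - mulx (Dy f) m + muly (Dx f) m)
       else if i = 5 then (\<lambda>m. - mulx (Dz f) m + mulz (Dx f) m)
       else if i = 6 then Dx f
       else if i = 7 then (\<lambda>m. - muly (Dz f) m + mulz (Dy f) m)
       else if i = 8 then Dy f
       else Dz f)"

definition Rword :: "nat list \<Rightarrow> chr" where
  "Rword w = foldr R w U_chr"

definition chr_scale :: "real \<Rightarrow> chr \<Rightarrow> chr" where
  "chr_scale r f = (\<lambda>m. r * f m)"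

definition S :: "nat \<Rightarrow> chr set" where
  "S n = module.span chr_scale
     {Rword w | w. length w \<le> n \<and> set w \<subseteq> {1..9}}"

end

theory Submission
  imports Defs "HOL-Library.Product_Lexorder"
begin



lemmas defs0 = Dx_def Dy_def Dz_def mulx_def muly_def mulz_def mult_def R_def

lemma R_add: "R i (f + g) = R i f + R i g"
  by (rule ext) (auto simp: defs0 algebra_simps split: prod.splits)
lemma R_diff: "R i (f - g) = R i f - R i g"
  by (rule ext) (auto simp: defs0 algebra_simps split: prod.splits)
lemma R_uminus: "R i (- f) = - R i f"
  by (rule ext) (auto simp: defs0 algebra_simps split: prod.splits)
lemma R_zero: "R i 0 = 0"
  by (rule ext) (auto simp: defs0 algebra_simps split: prod.splits)
lemma R_scale: "R i (chr_scale c f) = chr_scale c (R i f)"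
  by (rule ext) (auto simp: defs0 chr_scale_def algebra_simps split: prod.splits)

lemma c61: "R 6 (R 1 f) = R 1 (R 6 f) + f"
  by (rule ext) (auto simp: defs0 algebra_simps split: prod.splits)
lemma c82: "R 8 (R 2 f) = R 2 (R 8 f) + f"
  by (rule ext) (auto simp: defs0 algebra_simps split: prod.splits)
lemma c93: "R 9 (R 3 f) = R 3 (R 9 f) + f"
  by (rule ext) (auto simp: defs0 algebra_simps split: prod.splits)
lemma c62: "R 6 (R 2 f) = R 2 (R 6 f)"
  by (rule ext) (auto simp: defs0 algebra_simps split: prod.splits)
lemma c63: "R 6 (R 3 f) = R 3 (R 6 f)"
  by (rule ext) (auto simp: defs0 algebra_simps split: prod.splits)
lemma c81: "R 8 (R 1 f) = R 1 (R 8 f)"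
  by (rule ext) (auto simp: defs0 algebra_simps split: prod.splits)
lemma c83: "R 8 (R 3 f) = R 3 (R 8 f)"
  by (rule ext) (auto simp: defs0 algebra_simps split: prod.splits)
lemma c91: "R 9 (R 1 f) = R 1 (R 9 f)"
  by (rule ext) (auto simp: defs0 algebra_simps split: prod.splits)
lemma c92: "R 9 (R 2 f) = R 2 (R 9 f)"
  by (rule ext) (auto simp: defs0 algebra_simps split: prod.splits)
lemma c21: "R 2 (R 1 f) = R 1 (R 2 f)"
  by (rule ext) (auto simp: defs0 algebra_simps split: prod.splits)
lemma c31: "R 3 (R 1 f) = R 1 (R 3 f)"
  by (rule ext) (auto simp: defs0 algebra_simps split: prod.splits)
lemma c32: "R 3 (R 2 f) = R 2 (R 3 f)"
  by (rule ext) (auto simp: defs0 algebra_simps split: prod.splits)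
lemma c86: "R 8 (R 6 f) = R 6 (R 8 f)"
  by (rule ext) (auto simp: defs0 algebra_simps split: prod.splits)
lemma c96: "R 9 (R 6 f) = R 6 (R 9 f)"
  by (rule ext) (auto simp: defs0 algebra_simps split: prod.splits)
lemma c98: "R 9 (R 8 f) = R 8 (R 9 f)"
  by (rule ext) (auto simp: defs0 algebra_simps split: prod.splits)
lemma J4: "R 4 f = R 2 (R 6 f) - R 1 (R 8 f)"
  by (rule ext) (auto simp: defs0 algebra_simps split: prod.splits)
lemma J5: "R 5 f = R 3 (R 6 f) - R 1 (R 9 f)"
  by (rule ext) (auto simp: defs0 algebra_simps split: prod.splits)
lemma J7: "R 7 f = R 3 (R 8 f) - R 2 (R 9 f)"
  by (rule ext) (auto simp: defs0 algebra_simps split: prod.splits)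

lemmas nrm = R_add R_diff R_uminus R_zero c61 c82 c93 c62 c63 c81 c83 c91 c92 c21 c31 c32 c86 c96 c98

lemma cm_1_2: "R 1 (R 2 f) - R 2 (R 1 f) = 0"
  by (simp only: J4 J5 J7 nrm) (simp add: algebra_simps)
lemma cm_2_1: "R 2 (R 1 f) - R 1 (R 2 f) = 0"
  by (simp only: J4 J5 J7 nrm) (simp add: algebra_simps)
lemma cm_1_3: "R 1 (R 3 f) - R 3 (R 1 f) = 0"
  by (simp only: J4 J5 J7 nrm) (simp add: algebra_simps)
lemma cm_3_1: "R 3 (R 1 f) - R 1 (R 3 f) = 0"
  by (simp only: J4 J5 J7 nrm) (simp add: algebra_simps)
lemma cm_1_4: "R 1 (R 4 f) - R 4 (R 1 f) = - (R 2 f)"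
  by (simp only: J4 J5 J7 nrm) (simp add: algebra_simps)
lemma cm_4_1: "R 4 (R 1 f) - R 1 (R 4 f) = R 2 f"
  by (simp only: J4 J5 J7 nrm) (simp add: algebra_simps)
lemma cm_1_5: "R 1 (R 5 f) - R 5 (R 1 f) = - (R 3 f)"
  by (simp only: J4 J5 J7 nrm) (simp add: algebra_simps)
lemma cm_5_1: "R 5 (R 1 f) - R 1 (R 5 f) = R 3 f"
  by (simp only: J4 J5 J7 nrm) (simp add: algebra_simps)
lemma cm_1_6: "R 1 (R 6 f) - R 6 (R 1 f) = - (f)"
  by (simp only: J4 J5 J7 nrm) (simp add: algebra_simps)
lemma cm_6_1: "R 6 (R 1 f) - R 1 (R 6 f) = f"
  by (simp only: J4 J5 J7 nrm) (simp add: algebra_simps)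
lemma cm_1_7: "R 1 (R 7 f) - R 7 (R 1 f) = 0"
  by (simp only: J4 J5 J7 nrm) (simp add: algebra_simps)
lemma cm_7_1: "R 7 (R 1 f) - R 1 (R 7 f) = 0"
  by (simp only: J4 J5 J7 nrm) (simp add: algebra_simps)
lemma cm_1_8: "R 1 (R 8 f) - R 8 (R 1 f) = 0"
  by (simp only: J4 J5 J7 nrm) (simp add: algebra_simps)
lemma cm_8_1: "R 8 (R 1 f) - R 1 (R 8 f) = 0"
  by (simp only: J4 J5 J7 nrm) (simp add: algebra_simps)
lemma cm_1_9: "R 1 (R 9 f) - R 9 (R 1 f) = 0"
  by (simp only: J4 J5 J7 nrm) (simp add: algebra_simps)
lemma cm_9_1: "R 9 (R 1 f) - R 1 (R 9 f) = 0"
  by (simp only: J4 J5 J7 nrm) (simp add: algebra_simps)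
lemma cm_2_3: "R 2 (R 3 f) - R 3 (R 2 f) = 0"
  by (simp only: J4 J5 J7 nrm) (simp add: algebra_simps)
lemma cm_3_2: "R 3 (R 2 f) - R 2 (R 3 f) = 0"
  by (simp only: J4 J5 J7 nrm) (simp add: algebra_simps)
lemma cm_2_4: "R 2 (R 4 f) - R 4 (R 2 f) = R 1 f"
  by (simp only: J4 J5 J7 nrm) (simp add: algebra_simps)
lemma cm_4_2: "R 4 (R 2 f) - R 2 (R 4 f) = - (R 1 f)"
  by (simp only: J4 J5 J7 nrm) (simp add: algebra_simps)
lemma cm_2_5: "R 2 (R 5 f) - R 5 (R 2 f) = 0"
  by (simp only: J4 J5 J7 nrm) (simp add: algebra_simps)
lemma cm_5_2: "R 5 (R 2 f) - R 2 (R 5 f) = 0"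
  by (simp only: J4 J5 J7 nrm) (simp add: algebra_simps)
lemma cm_2_6: "R 2 (R 6 f) - R 6 (R 2 f) = 0"
  by (simp only: J4 J5 J7 nrm) (simp add: algebra_simps)
lemma cm_6_2: "R 6 (R 2 f) - R 2 (R 6 f) = 0"
  by (simp only: J4 J5 J7 nrm) (simp add: algebra_simps)
lemma cm_2_7: "R 2 (R 7 f) - R 7 (R 2 f) = - (R 3 f)"
  by (simp only: J4 J5 J7 nrm) (simp add: algebra_simps)
lemma cm_7_2: "R 7 (R 2 f) - R 2 (R 7 f) = R 3 f"
  by (simp only: J4 J5 J7 nrm) (simp add: algebra_simps)
lemma cm_2_8: "R 2 (R 8 f) - R 8 (R 2 f) = - (f)"
  by (simp only: J4 J5 J7 nrm) (simp add: algebra_simps)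
lemma cm_8_2: "R 8 (R 2 f) - R 2 (R 8 f) = f"
  by (simp only: J4 J5 J7 nrm) (simp add: algebra_simps)
lemma cm_2_9: "R 2 (R 9 f) - R 9 (R 2 f) = 0"
  by (simp only: J4 J5 J7 nrm) (simp add: algebra_simps)
lemma cm_9_2: "R 9 (R 2 f) - R 2 (R 9 f) = 0"
  by (simp only: J4 J5 J7 nrm) (simp add: algebra_simps)
lemma cm_3_4: "R 3 (R 4 f) - R 4 (R 3 f) = 0"
  by (simp only: J4 J5 J7 nrm) (simp add: algebra_simps)
lemma cm_4_3: "R 4 (R 3 f) - R 3 (R 4 f) = 0"
  by (simp only: J4 J5 J7 nrm) (simp add: algebra_simps)
lemma cm_3_5: "R 3 (R 5 f) - R 5 (R 3 f) = R 1 f"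
  by (simp only: J4 J5 J7 nrm) (simp add: algebra_simps)
lemma cm_5_3: "R 5 (R 3 f) - R 3 (R 5 f) = - (R 1 f)"
  by (simp only: J4 J5 J7 nrm) (simp add: algebra_simps)
lemma cm_3_6: "R 3 (R 6 f) - R 6 (R 3 f) = 0"
  by (simp only: J4 J5 J7 nrm) (simp add: algebra_simps)
lemma cm_6_3: "R 6 (R 3 f) - R 3 (R 6 f) = 0"
  by (simp only: J4 J5 J7 nrm) (simp add: algebra_simps)
lemma cm_3_7: "R 3 (R 7 f) - R 7 (R 3 f) = R 2 f"
  by (simp only: J4 J5 J7 nrm) (simp add: algebra_simps)
lemma cm_7_3: "R 7 (R 3 f) - R 3 (R 7 f) = - (R 2 f)"
  by (simp only: J4 J5 J7 nrm) (simp add: algebra_simps)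
lemma cm_3_8: "R 3 (R 8 f) - R 8 (R 3 f) = 0"
  by (simp only: J4 J5 J7 nrm) (simp add: algebra_simps)
lemma cm_8_3: "R 8 (R 3 f) - R 3 (R 8 f) = 0"
  by (simp only: J4 J5 J7 nrm) (simp add: algebra_simps)
lemma cm_3_9: "R 3 (R 9 f) - R 9 (R 3 f) = - (f)"
  by (simp only: J4 J5 J7 nrm) (simp add: algebra_simps)
lemma cm_9_3: "R 9 (R 3 f) - R 3 (R 9 f) = f"
  by (simp only: J4 J5 J7 nrm) (simp add: algebra_simps)
lemma cm_4_5: "R 4 (R 5 f) - R 5 (R 4 f) = R 7 f"
  by (simp only: J4 J5 J7 nrm) (simp add: algebra_simps)
lemma cm_5_4: "R 5 (R 4 f) - R 4 (R 5 f) = - (R 7 f)"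
  by (simp only: J4 J5 J7 nrm) (simp add: algebra_simps)
lemma cm_4_6: "R 4 (R 6 f) - R 6 (R 4 f) = R 8 f"
  by (simp only: J4 J5 J7 nrm) (simp add: algebra_simps)
lemma cm_6_4: "R 6 (R 4 f) - R 4 (R 6 f) = - (R 8 f)"
  by (simp only: J4 J5 J7 nrm) (simp add: algebra_simps)
lemma cm_4_7: "R 4 (R 7 f) - R 7 (R 4 f) = - (R 5 f)"
  by (simp only: J4 J5 J7 nrm) (simp add: algebra_simps)
lemma cm_7_4: "R 7 (R 4 f) - R 4 (R 7 f) = R 5 f"
  by (simp only: J4 J5 J7 nrm) (simp add: algebra_simps)
lemma cm_4_8: "R 4 (R 8 f) - R 8 (R 4 f) = - (R 6 f)"
  by (simp only: J4 J5 J7 nrm) (simp add: algebra_simps)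
lemma cm_8_4: "R 8 (R 4 f) - R 4 (R 8 f) = R 6 f"
  by (simp only: J4 J5 J7 nrm) (simp add: algebra_simps)
lemma cm_4_9: "R 4 (R 9 f) - R 9 (R 4 f) = 0"
  by (simp only: J4 J5 J7 nrm) (simp add: algebra_simps)
lemma cm_9_4: "R 9 (R 4 f) - R 4 (R 9 f) = 0"
  by (simp only: J4 J5 J7 nrm) (simp add: algebra_simps)
lemma cm_5_6: "R 5 (R 6 f) - R 6 (R 5 f) = R 9 f"
  by (simp only: J4 J5 J7 nrm) (simp add: algebra_simps)
lemma cm_6_5: "R 6 (R 5 f) - R 5 (R 6 f) = - (R 9 f)"
  by (simp only: J4 J5 J7 nrm) (simp add: algebra_simps)
lemma cm_5_7: "R 5 (R 7 f) - R 7 (R 5 f) = R 4 f"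
  by (simp only: J4 J5 J7 nrm) (simp add: algebra_simps)
lemma cm_7_5: "R 7 (R 5 f) - R 5 (R 7 f) = - (R 4 f)"
  by (simp only: J4 J5 J7 nrm) (simp add: algebra_simps)
lemma cm_5_8: "R 5 (R 8 f) - R 8 (R 5 f) = 0"
  by (simp only: J4 J5 J7 nrm) (simp add: algebra_simps)
lemma cm_8_5: "R 8 (R 5 f) - R 5 (R 8 f) = 0"
  by (simp only: J4 J5 J7 nrm) (simp add: algebra_simps)
lemma cm_5_9: "R 5 (R 9 f) - R 9 (R 5 f) = - (R 6 f)"
  by (simp only: J4 J5 J7 nrm) (simp add: algebra_simps)
lemma cm_9_5: "R 9 (R 5 f) - R 5 (R 9 f) = R 6 f"
  by (simp only: J4 J5 J7 nrm) (simp add: algebra_simps)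
lemma cm_6_7: "R 6 (R 7 f) - R 7 (R 6 f) = 0"
  by (simp only: J4 J5 J7 nrm) (simp add: algebra_simps)
lemma cm_7_6: "R 7 (R 6 f) - R 6 (R 7 f) = 0"
  by (simp only: J4 J5 J7 nrm) (simp add: algebra_simps)
lemma cm_6_8: "R 6 (R 8 f) - R 8 (R 6 f) = 0"
  by (simp only: J4 J5 J7 nrm) (simp add: algebra_simps)
lemma cm_8_6: "R 8 (R 6 f) - R 6 (R 8 f) = 0"
  by (simp only: J4 J5 J7 nrm) (simp add: algebra_simps)
lemma cm_6_9: "R 6 (R 9 f) - R 9 (R 6 f) = 0"
  by (simp only: J4 J5 J7 nrm) (simp add: algebra_simps)
lemma cm_9_6: "R 9 (R 6 f) - R 6 (R 9 f) = 0"
  by (simp only: J4 J5 J7 nrm) (simp add: algebra_simps)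
lemma cm_7_8: "R 7 (R 8 f) - R 8 (R 7 f) = R 9 f"
  by (simp only: J4 J5 J7 nrm) (simp add: algebra_simps)
lemma cm_8_7: "R 8 (R 7 f) - R 7 (R 8 f) = - (R 9 f)"
  by (simp only: J4 J5 J7 nrm) (simp add: algebra_simps)
lemma cm_7_9: "R 7 (R 9 f) - R 9 (R 7 f) = - (R 8 f)"
  by (simp only: J4 J5 J7 nrm) (simp add: algebra_simps)
lemma cm_9_7: "R 9 (R 7 f) - R 7 (R 9 f) = R 8 f"
  by (simp only: J4 J5 J7 nrm) (simp add: algebra_simps)
lemma cm_8_9: "R 8 (R 9 f) - R 9 (R 8 f) = 0"
  by (simp only: J4 J5 J7 nrm) (simp add: algebra_simps)
lemma cm_9_8: "R 9 (R 8 f) - R 8 (R 9 f) = 0"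
  by (simp only: J4 J5 J7 nrm) (simp add: algebra_simps)

lemmas cm_lemmas = cm_1_2 cm_2_1 cm_1_3 cm_3_1 cm_1_4 cm_4_1 cm_1_5 cm_5_1 cm_1_6 cm_6_1 cm_1_7 cm_7_1 cm_1_8 cm_8_1 cm_1_9 cm_9_1 cm_2_3 cm_3_2 cm_2_4 cm_4_2 cm_2_5 cm_5_2 cm_2_6 cm_6_2 cm_2_7 cm_7_2 cm_2_8 cm_8_2 cm_2_9 cm_9_2 cm_3_4 cm_4_3 cm_3_5 cm_5_3 cm_3_6 cm_6_3 cm_3_7 cm_7_3 cm_3_8 cm_8_3 cm_3_9 cm_9_3 cm_4_5 cm_5_4 cm_4_6 cm_6_4 cm_4_7 cm_7_4 cm_4_8 cm_8_4 cm_4_9 cm_9_4 cm_5_6 cm_6_5 cm_5_7 cm_7_5 cm_5_8 cm_8_5 cm_5_9 cm_9_5 cm_6_7 cm_7_6 cm_6_8 cm_8_6 cm_6_9 cm_9_6 cm_7_8 cm_8_7 cm_7_9 cm_9_7 cm_8_9 cm_9_8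


declare fun_diff_def[simp del] fun_Compl_def[simp del]

interpretation chr: vector_space chr_scale
  by unfold_locales (auto simp: chr_scale_def algebra_simps fun_eq_iff)

lemma S_eq: "S n = chr.span {Rword w | w. length w \<le> n \<and> set w \<subseteq> {1..9}}"
  by (simp add: S_def)

lemma Rword_cons[simp]: "Rword (a # w) = R a (Rword w)"
  by (simp add: Rword_def)

lemma Rword_in_S: "length w \<le> n \<Longrightarrow> set w \<subseteq> {1..9} \<Longrightarrow> Rword w \<in> S n"
  unfolding S_eq by (rule chr.span_base) blast

lemma S_mono: "m \<le> n \<Longrightarrow> S m \<subseteq> S n"
  unfolding S_eq by (rule chr.span_mono) auto

lemma S_sub: "chr.subspace (S n)" unfolding S_eq by simp
lemma S_add: "f \<in> S n \<Longrightarrow> g \<in> S n \<Longrightarrow> f + g \<in> S n" unfolding S_eq by (rule chr.span_add)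
lemma S_diff: "f \<in> S n \<Longrightarrow> g \<in> S n \<Longrightarrow> f - g \<in> S n" unfolding S_eq by (rule chr.span_diff)
lemma S_neg: "f \<in> S n \<Longrightarrow> - f \<in> S n" unfolding S_eq by (rule chr.span_neg)
lemma S_zero: "0 \<in> S n" unfolding S_eq by (rule chr.span_zero)
lemma S_scale: "f \<in> S n \<Longrightarrow> chr_scale c f \<in> S n" unfolding S_eq by (rule chr.span_scale)

lemma R_S:
  assumes a: "a \<in> {1..9}" and f: "f \<in> S m"
  shows "R a f \<in> S (Suc m)"
proof -
  have "S m \<subseteq> {f. R a f \<in> S (Suc m)}"
    unfolding S_eq[of m]
  proof (rule chr.span_minimal)
    show "{Rword w |w. length w \<le> m \<and> set w \<subseteq> {1..9}} \<subseteq> {f. R a f \<in> S (Suc m)}"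
    proof safe
      fix w :: "nat list" assume "length w \<le> m" "set w \<subseteq> {1..9}"
      then show "R a (Rword w) \<in> S (Suc m)"
        using Rword_in_S[of "a # w" "Suc m"] a by simp
    qed
    show "chr.subspace {f. R a f \<in> S (Suc m)}"
      unfolding chr.subspace_def
      by (auto simp: R_add R_zero R_scale intro: S_add S_scale S_zero)
  qed
  then show ?thesis using f by blast
qed
lemma one_nine_cases: "(i::nat) \<in> {1..9} \<Longrightarrow> i = 1 \<or> i = 2 \<or> i = 3 \<or> i = 4 \<or> i = 5 \<or> i = 6 \<or> i = 7 \<or> i = 8 \<or> i = 9"
  by auto

lemma comm_S:
  assumes i: "i \<in> {1..9}" and j: "j \<in> {1..9}" and X: "X \<in> S m"
  shows "R i (R j X) - R j (R i X) \<in> S (Suc m)"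
proof -
  have X': "X \<in> S (Suc m)" using X S_mono[of m "Suc m"] by auto
  have RX: "k \<in> {1..9} \<Longrightarrow> R k X \<in> S (Suc m)" for k using R_S X by blast
  have nX: "- X \<in> S (Suc m)" using X' S_neg by blast
  have nRX: "k \<in> {1..9} \<Longrightarrow> - R k X \<in> S (Suc m)" for k using RX S_neg by blast
  have z: "0 \<in> S (Suc m)" by (rule S_zero)
  show ?thesis
    using one_nine_cases[OF i] one_nine_cases[OF j]
    apply (elim disjE)
    apply (simp_all only: cm_lemmas diff_self)
    apply (simp_all add: z X' nX RX nRX)
    done
qed
lemma R_S_diff: "a \<in> {1..9} \<Longrightarrow> f - g \<in> S m \<Longrightarrow> R a f - R a g \<in> S (Suc m)"
  using R_S[of a "f - g" m] by (simp add: R_diff)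

lemma move_S:
  assumes "a \<in> {1..9}" "set p \<subseteq> {1..9}" "set q \<subseteq> {1..9}"
  shows "Rword (a # p @ q) - Rword (p @ a # q) \<in> S (length p + length q)"
  using assms(2)
proof (induction p)
  case Nil
  have "Rword (a # [] @ q) - Rword ([] @ a # q) = 0" by simp
  then show ?case using S_zero by metis
next
  case (Cons b p)
  have b: "b \<in> {1..9}" and p: "set p \<subseteq> {1..9}" using Cons.prems by auto
  have Y: "Rword (p @ q) \<in> S (length p + length q)"
    using Rword_in_S[of "p @ q"] p assms(3) by auto
  have 1: "R a (R b (Rword (p @ q))) - R b (R a (Rword (p @ q))) \<in> S (Suc (length p + length q))"
    using comm_S[OF assms(1) b Y] .
  have 2: "R b (Rword (a # p @ q)) - R b (Rword (p @ a # q)) \<in> S (Suc (length p + length q))"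
    using R_S_diff[OF b Cons.IH[OF p]] .
  have eq: "Rword (a # (b # p) @ q) - Rword ((b # p) @ a # q) =
     (R a (R b (Rword (p @ q))) - R b (R a (Rword (p @ q)))) + (R b (Rword (a # p @ q)) - R b (Rword (p @ a # q)))"
    by simp
  have "Rword (a # (b # p) @ q) - Rword ((b # p) @ a # q) \<in> S (Suc (length p + length q))"
    unfolding eq by (rule S_add[OF 1 2])
  then show ?case by (simp only: length_Cons add_Suc)
qed

definition wordof :: "(nat \<Rightarrow> nat) \<Rightarrow> nat list" where
  "wordof e = concat (map (\<lambda>i. replicate (e i) i) [1..<10])"
definition vv :: "(nat \<Rightarrow> nat) \<Rightarrow> chr" where
  "vv e = Rword (wordof e)"
definition sz :: "(nat \<Rightarrow> nat) \<Rightarrow> nat" where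
  "sz e = (\<Sum>i\<in>{1..9}. e i)"
definition upd :: "nat \<Rightarrow> (nat \<Rightarrow> nat) \<Rightarrow> (nat \<Rightarrow> nat)" where
  "upd a e = e(a := Suc (e a))"

lemma set_wordof: "set (wordof e) \<subseteq> {1..9}"
  by (auto simp: wordof_def)

lemma length_wordof: "length (wordof e) = sz e"
proof -
  have "length (wordof e) = sum_list (map e [1..<10])"
    by (simp add: wordof_def length_concat comp_def)
  also have "\<dots> = sum e {1..<10}" by (simp add: sum_list_distinct_conv_sum_set)
  also have "{1..<10} = {1..(9::nat)}" by auto
  finally show ?thesis by (simp add: sz_def)
qed

lemma sz_upd: "a \<in> {1..9} \<Longrightarrow> sz (upd a e) = Suc (sz e)"
proof -
  assume a: "a \<in> {1..9}"
  have "sz (upd a e) = (\<Sum>i\<in>{1..9}. e i + (if i = a then 1 else 0))"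
    unfolding sz_def upd_def by (rule sum.cong) auto
  also have "\<dots> = sz e + 1" using a by (simp add: sum.distrib sz_def)
  finally show ?thesis by simp
qed

lemma wordof_split:
  assumes a: "a \<in> {1..9}"
  shows "\<exists>p q. wordof e = p @ q \<and> wordof (upd a e) = p @ a # q"
proof -
  have u0: "[1..<10] = [1..<a] @ [a..<10]"
    using upt_add_eq_append[of 1 a "10-a"] a by simp
  have u: "[1..<10] = [1..<a] @ a # [Suc a..<10]"
    unfolding u0 using a upt_conv_Cons[of a 10] by simp
  let ?p = "concat (map (\<lambda>i. replicate (e i) i) [1..<a])"
  let ?q = "replicate (e a) a @ concat (map (\<lambda>i. replicate (e i) i) [Suc a..<10])"
  have "wordof e = ?p @ ?q" unfolding wordof_def u by simp
  moreover have "wordof (upd a e) = ?p @ a # ?q"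
  proof -
    have m1: "map (\<lambda>i. replicate (upd a e i) i) [1..<a] = map (\<lambda>i. replicate (e i) i) [1..<a]"
      by (auto simp: upd_def)
    have m2: "map (\<lambda>i. replicate (upd a e i) i) [Suc a..<10] = map (\<lambda>i. replicate (e i) i) [Suc a..<10]"
      by (auto simp: upd_def)
    show ?thesis unfolding wordof_def u map_append list.map concat_append m1 m2 concat.simps by (simp add: upd_def)
  qed
  ultimately show ?thesis by blast
qed

lemma ins_S:
  assumes a: "a \<in> {1..9}"
  shows "Rword (a # wordof e) - vv (upd a e) \<in> S (sz e)"
proof -
  obtain p q where pq: "wordof e = p @ q" "wordof (upd a e) = p @ a # q"
    using wordof_split[OF a] by blast
  have "set p \<subseteq> {1..9}" "set q \<subseteq> {1..9}" using set_wordof[of e] pq(1) by auto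
  from move_S[OF a this] show ?thesis
    using length_wordof[of e] pq by (simp add: vv_def)
qed

lemma ins2_S:
  assumes a: "a \<in> {1..9}" and b: "b \<in> {1..9}"
  shows "Rword (a # b # wordof e) - vv (upd a (upd b e)) \<in> S (Suc (sz e))"
proof -
  have 1: "R a (Rword (b # wordof e)) - R a (vv (upd b e)) \<in> S (Suc (sz e))"
    using R_S_diff[OF a ins_S[OF b]] .
  have 2: "Rword (a # wordof (upd b e)) - vv (upd a (upd b e)) \<in> S (Suc (sz e))"
    using ins_S[OF a, of "upd b e"] sz_upd[OF b] by simp
  show ?thesis using S_add[OF 1 2] by (simp add: vv_def)
qed

lemma concat_map_nil: "concat (map (\<lambda>i. []) xs) = []"
  by (induct xs) auto

definition cnt :: "nat list \<Rightarrow> nat \<Rightarrow> nat" where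
  "cnt w = (\<lambda>i. count_list w i)"

lemma cnt_cons: "cnt (a # w) = upd a (cnt w)"
  by (auto simp: cnt_def upd_def fun_eq_iff)

lemma sz_cnt: "set w \<subseteq> {1..9} \<Longrightarrow> sz (cnt w) = length w"
proof (induction w)
  case Nil then show ?case by (simp add: sz_def cnt_def)
next
  case (Cons a w) then show ?case by (simp add: cnt_cons sz_upd)
qed

lemma reorder_S:
  assumes "set w \<subseteq> {1..9}"
  shows "Rword w - vv (cnt w) \<in> S (length w - 1)"
  using assms
proof (induction w)
  case Nil
  have "vv (cnt []) = Rword []" by (simp add: vv_def cnt_def wordof_def concat_map_nil)
  then have "Rword [] - vv (cnt []) = 0" by simp
  then show ?case using S_zero by (metis list.size(3))
next
  case (Cons a w)
  have a: "a \<in> {1..9}" and w: "set w \<subseteq> {1..9}" using Cons.prems by auto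
  have 1: "R a (Rword w) - R a (vv (cnt w)) \<in> S (length w)"
  proof (cases w)
    case Nil then show ?thesis using S_zero[of 0] by (simp add: vv_def cnt_def wordof_def concat_map_nil)
  next
    case (Cons b w') then show ?thesis using R_S_diff[OF a Cons.IH[OF w]] by simp
  qed
  have 2: "Rword (a # wordof (cnt w)) - vv (upd a (cnt w)) \<in> S (length w)"
    using ins_S[OF a, of "cnt w"] sz_cnt[OF w] by simp
  have eq: "Rword (a # w) - vv (cnt (a # w)) = (R a (Rword w) - R a (vv (cnt w))) + (Rword (a # wordof (cnt w)) - vv (upd a (cnt w)))"
    by (simp add: vv_def cnt_cons)
  have "Rword (a # w) - vv (cnt (a # w)) \<in> S (length w)"
    unfolding eq by (rule S_add[OF 1 2])
  then show ?case by (simp only: length_Cons diff_Suc_1)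
qed
lemma rel1: "R 2 (R 6 f) = R 1 (R 8 f) + R 4 f"
  by (simp only: J4 J5 J7 nrm) (simp add: algebra_simps)
lemma rel2: "R 3 (R 6 f) = R 1 (R 9 f) + R 5 f"
  by (simp only: J4 J5 J7 nrm) (simp add: algebra_simps)
lemma rel3: "R 3 (R 8 f) = R 2 (R 9 f) + R 7 f"
  by (simp only: J4 J5 J7 nrm) (simp add: algebra_simps)
lemma rel4: "R 2 (R 5 f) = R 1 (R 7 f) + R 3 (R 4 f)"
  by (simp only: J4 J5 J7 nrm) (simp add: algebra_simps)
lemma rel5: "R 6 (R 7 f) = R 8 (R 5 f) - R 9 (R 4 f)"
  by (simp only: J4 J5 J7 nrm) (simp add: algebra_simps)

lemma red2:
  assumes ab: "a \<in> {1..9}" "b \<in> {1..9}" and cd: "c \<in> {1..9}" "d \<in> {1..9}" and g: "g \<in> {1..9}"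
    and rel: "\<And>f. R a (R b f) = R c (R d f) + R g f"
  shows "vv (upd a (upd b e)) - vv (upd c (upd d e)) \<in> S (Suc (sz e))"
proof -
  let ?w = "wordof e"
  have 1: "Rword (a # b # ?w) - vv (upd a (upd b e)) \<in> S (Suc (sz e))" by (rule ins2_S[OF ab])
  have 2: "Rword (c # d # ?w) - vv (upd c (upd d e)) \<in> S (Suc (sz e))" by (rule ins2_S[OF cd])
  have 3: "Rword (g # ?w) \<in> S (Suc (sz e))"
    using Rword_in_S[of "g # ?w"] g set_wordof[of e] length_wordof[of e] by auto
  have eq: "vv (upd a (upd b e)) - vv (upd c (upd d e)) =
     Rword (g # ?w) - (Rword (a # b # ?w) - vv (upd a (upd b e))) + (Rword (c # d # ?w) - vv (upd c (upd d e)))"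
    using rel[of "Rword ?w"] by simp
  show ?thesis unfolding eq by (intro S_add S_diff 1 2 3)
qed

lemma red3p:
  assumes ab: "a \<in> {1..9}" "b \<in> {1..9}" and cd: "c \<in> {1..9}" "d \<in> {1..9}"
    and pq: "p \<in> {1..9}" "q \<in> {1..9}"
    and rel: "\<And>f. R a (R b f) = R c (R d f) + R p (R q f)"
  shows "vv (upd a (upd b e)) - (vv (upd c (upd d e)) + vv (upd p (upd q e))) \<in> S (Suc (sz e))"
proof -
  let ?w = "wordof e"
  have 1: "Rword (a # b # ?w) - vv (upd a (upd b e)) \<in> S (Suc (sz e))" by (rule ins2_S[OF ab])
  have 2: "Rword (c # d # ?w) - vv (upd c (upd d e)) \<in> S (Suc (sz e))" by (rule ins2_S[OF cd])
  have 3: "Rword (p # q # ?w) - vv (upd p (upd q e)) \<in> S (Suc (sz e))" by (rule ins2_S[OF pq])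
  have eq: "vv (upd a (upd b e)) - (vv (upd c (upd d e)) + vv (upd p (upd q e))) =
     (Rword (c # d # ?w) - vv (upd c (upd d e))) + (Rword (p # q # ?w) - vv (upd p (upd q e)))
     - (Rword (a # b # ?w) - vv (upd a (upd b e)))"
    using rel[of "Rword ?w"] by (simp add: algebra_simps)
  show ?thesis unfolding eq by (intro S_add S_diff 1 2 3)
qed

lemma red3m:
  assumes ab: "a \<in> {1..9}" "b \<in> {1..9}" and cd: "c \<in> {1..9}" "d \<in> {1..9}"
    and pq: "p \<in> {1..9}" "q \<in> {1..9}"
    and rel: "\<And>f. R a (R b f) = R c (R d f) - R p (R q f)"
  shows "vv (upd a (upd b e)) - (vv (upd c (upd d e)) - vv (upd p (upd q e))) \<in> S (Suc (sz e))"
proof -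
  let ?w = "wordof e"
  have 1: "Rword (a # b # ?w) - vv (upd a (upd b e)) \<in> S (Suc (sz e))" by (rule ins2_S[OF ab])
  have 2: "Rword (c # d # ?w) - vv (upd c (upd d e)) \<in> S (Suc (sz e))" by (rule ins2_S[OF cd])
  have 3: "Rword (p # q # ?w) - vv (upd p (upd q e)) \<in> S (Suc (sz e))" by (rule ins2_S[OF pq])
  have eq: "vv (upd a (upd b e)) - (vv (upd c (upd d e)) - vv (upd p (upd q e))) =
     (Rword (c # d # ?w) - vv (upd c (upd d e))) - (Rword (p # q # ?w) - vv (upd p (upd q e)))
     - (Rword (a # b # ?w) - vv (upd a (upd b e)))"
    using rel[of "Rword ?w"] by (simp add: algebra_simps)
  show ?thesis unfolding eq by (intro S_add S_diff 1 2 3)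
qed

definition std :: "(nat \<Rightarrow> nat) \<Rightarrow> bool" where
  "std e \<longleftrightarrow> \<not> (0 < e 6 \<and> 0 < e 2) \<and> \<not> (0 < e 6 \<and> 0 < e 3) \<and> \<not> (0 < e 8 \<and> 0 < e 3)
     \<and> \<not> (0 < e 2 \<and> 0 < e 5) \<and> \<not> (0 < e 6 \<and> 0 < e 7)"

definition Std :: "nat \<Rightarrow> (nat \<Rightarrow> nat) set" where
  "Std k = {e. (\<forall>i. i \<notin> {1..9} \<longrightarrow> e i = 0) \<and> sz e \<le> k \<and> std e}"

definition T :: "nat \<Rightarrow> chr set" where
  "T k = chr.span (vv ` Std k)"

lemma T_mono: "k \<le> k' \<Longrightarrow> T k \<subseteq> T k'"
  unfolding T_def by (rule chr.span_mono) (auto simp: Std_def)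

lemma T_add: "f \<in> T n \<Longrightarrow> g \<in> T n \<Longrightarrow> f + g \<in> T n" unfolding T_def by (rule chr.span_add)
lemma T_diff: "f \<in> T n \<Longrightarrow> g \<in> T n \<Longrightarrow> f - g \<in> T n" unfolding T_def by (rule chr.span_diff)

definition dec2 :: "nat \<Rightarrow> nat \<Rightarrow> (nat \<Rightarrow> nat) \<Rightarrow> (nat \<Rightarrow> nat)" where
  "dec2 a b e = e(a := e a - 1, b := e b - 1)"

lemma upd_dec2: "a \<noteq> b \<Longrightarrow> 0 < e a \<Longrightarrow> 0 < e b \<Longrightarrow> upd a (upd b (dec2 a b e)) = e"
  by (auto simp: upd_def dec2_def fun_eq_iff)

lemma sz_dec2: "a \<in> {1..9} \<Longrightarrow> b \<in> {1..9} \<Longrightarrow> a \<noteq> b \<Longrightarrow> 0 < e a \<Longrightarrow> 0 < e b \<Longrightarrow> Suc (Suc (sz (dec2 a b e))) = sz e"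
  using sz_upd[of a "upd b (dec2 a b e)"] sz_upd[of b "dec2 a b e"] upd_dec2[of a b e] by simp

lemma supp_upd: "(\<forall>i. i \<notin> {1..9} \<longrightarrow> e i = 0) \<Longrightarrow> a \<in> {1..9} \<Longrightarrow> (\<forall>i. i \<notin> {1..9} \<longrightarrow> upd a e i = 0)"
  by (auto simp: upd_def)
lemma supp_dec2: "(\<forall>i. i \<notin> {1..9} \<longrightarrow> e i = 0) \<Longrightarrow> (\<forall>i. i \<notin> {1..9} \<longrightarrow> dec2 a b e i = 0)"
  by (auto simp: dec2_def)

lemma vv_in_T:
  assumes IH: "S (k - 1) \<subseteq> T k"
  shows "(\<forall>i. i \<notin> {1..9} \<longrightarrow> e i = 0) \<Longrightarrow> sz e = k \<Longrightarrow> vv e \<in> T k"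
proof (induction e rule: wf_induct_rule[OF wf_measures[of "[\<lambda>e. e 6, \<lambda>e. e 8, \<lambda>e. e 9, \<lambda>e. e 5]"]])
  case (1 e)
  note supp = "1.prems"(1) and sze = "1.prems"(2)
  show ?case
  proof (cases "std e")
    case True
    then have "e \<in> Std k" using supp sze by (simp add: Std_def)
    then show ?thesis unfolding T_def by (intro chr.span_base) blast
  next
    case False
    let ?e0 = "\<lambda>a b. dec2 a b e"
    have S_T: "f \<in> S (Suc (sz (dec2 a b e))) \<Longrightarrow> f \<in> T k"
      if "a \<in> {1..9}" "b \<in> {1..9}" "a \<noteq> b" "0 < e a" "0 < e b" for f a b
    proof -
      have "Suc (sz (dec2 a b e)) = k - 1" using sz_dec2[OF that] sze by simp
      then show "f \<in> S (Suc (sz (dec2 a b e))) \<Longrightarrow> f \<in> T k" using IH by auto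
    qed
    have new: "vv (upd c (upd d (dec2 a b e))) \<in> T k"
      if "a \<in> {1..9}" "b \<in> {1..9}" "a \<noteq> b" "0 < e a" "0 < e b" "c \<in> {1..9}" "d \<in> {1..9}"
         "(upd c (upd d (dec2 a b e)), e) \<in> measures [\<lambda>e. e 6, \<lambda>e. e 8, \<lambda>e. e 9, \<lambda>e. e 5]" for a b c d
    proof (rule "1.IH"[OF that(8)])
      show "\<forall>i. i \<notin> {1..9} \<longrightarrow> upd c (upd d (dec2 a b e)) i = 0"
        using supp that by (intro supp_upd supp_dec2) (auto simp: upd_def dec2_def)
      show "sz (upd c (upd d (dec2 a b e))) = k"
        using sz_upd[of c] sz_upd[of d] sz_dec2[OF that(1-5)] sze that by simp
    qed
    from False consider (r1) "0 < e 6 \<and> 0 < e 2" | (r2) "0 < e 6 \<and> 0 < e 3" | (r3) "0 < e 8 \<and> 0 < e 3"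
      | (r4) "0 < e 2 \<and> 0 < e 5" | (r5) "0 < e 6 \<and> 0 < e 7"
      unfolding std_def by blast
    then show ?thesis
    proof cases
      case r1
      have d: "vv e - vv (upd 1 (upd 8 (dec2 2 6 e))) \<in> T k"
        using red2[of 2 6 1 8 4 "dec2 2 6 e", OF _ _ _ _ _ rel1] upd_dec2[of 2 6 e] r1
        by (intro S_T[of 2 6]) auto
      have n: "vv (upd 1 (upd 8 (dec2 2 6 e))) \<in> T k"
        using r1 by (intro new[of 2 6]) (auto simp: upd_def dec2_def)
      show ?thesis using T_add[OF d n] by simp
    next
      case r2
      have d: "vv e - vv (upd 1 (upd 9 (dec2 3 6 e))) \<in> T k"
        using red2[of 3 6 1 9 5 "dec2 3 6 e", OF _ _ _ _ _ rel2] upd_dec2[of 3 6 e] r2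
        by (intro S_T[of 3 6]) auto
      have n: "vv (upd 1 (upd 9 (dec2 3 6 e))) \<in> T k"
        using r2 by (intro new[of 3 6]) (auto simp: upd_def dec2_def)
      show ?thesis using T_add[OF d n] by simp
    next
      case r3
      have d: "vv e - vv (upd 2 (upd 9 (dec2 3 8 e))) \<in> T k"
        using red2[of 3 8 2 9 7 "dec2 3 8 e", OF _ _ _ _ _ rel3] upd_dec2[of 3 8 e] r3
        by (intro S_T[of 3 8]) auto
      have n: "vv (upd 2 (upd 9 (dec2 3 8 e))) \<in> T k"
        using r3 by (intro new[of 3 8]) (auto simp: upd_def dec2_def)
      show ?thesis using T_add[OF d n] by simp
    next
      case r4
      have d: "vv e - (vv (upd 1 (upd 7 (dec2 2 5 e))) + vv (upd 3 (upd 4 (dec2 2 5 e)))) \<in> T k"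
        using red3p[of 2 5 1 7 3 4 "dec2 2 5 e", OF _ _ _ _ _ _ rel4] upd_dec2[of 2 5 e] r4
        by (intro S_T[of 2 5]) auto
      have n1: "vv (upd 1 (upd 7 (dec2 2 5 e))) \<in> T k"
        using r4 by (intro new[of 2 5]) (auto simp: upd_def dec2_def)
      have n2: "vv (upd 3 (upd 4 (dec2 2 5 e))) \<in> T k"
        using r4 by (intro new[of 2 5]) (auto simp: upd_def dec2_def)
      show ?thesis using T_add[OF d T_add[OF n1 n2]] by simp
    next
      case r5
      have d: "vv e - (vv (upd 8 (upd 5 (dec2 6 7 e))) - vv (upd 9 (upd 4 (dec2 6 7 e)))) \<in> T k"
        using red3m[of 6 7 8 5 9 4 "dec2 6 7 e", OF _ _ _ _ _ _ rel5] upd_dec2[of 6 7 e] r5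
        by (intro S_T[of 6 7]) auto
      have n1: "vv (upd 8 (upd 5 (dec2 6 7 e))) \<in> T k"
        using r5 by (intro new[of 6 7]) (auto simp: upd_def dec2_def)
      have n2: "vv (upd 9 (upd 4 (dec2 6 7 e))) \<in> T k"
        using r5 by (intro new[of 6 7]) (auto simp: upd_def dec2_def)
      show ?thesis using T_add[OF d T_diff[OF n1 n2]] by simp
    qed
  qed
qed
lemma supp_cnt: "set w \<subseteq> {1..9} \<Longrightarrow> \<forall>i. i \<notin> {1..9} \<longrightarrow> cnt w i = 0"
  by (auto simp: cnt_def count_list_0_iff)

lemma S_sub_T: "S k \<subseteq> T k"
proof (induction k rule: less_induct)
  case (less k)
  show ?case
    unfolding S_eq[of k]
  proof (rule chr.span_minimal)
    show "chr.subspace (T k)" unfolding T_def by simp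
    show "{Rword w |w. length w \<le> k \<and> set w \<subseteq> {1..9}} \<subseteq> T k"
    proof safe
      fix w :: "nat list" assume len: "length w \<le> k" and w: "set w \<subseteq> {1..9}"
      show "Rword w \<in> T k"
      proof (cases "length w < k")
        case True
        then have "Rword w \<in> T (length w)" using less.IH[of "length w"] Rword_in_S[OF order_refl w] by blast
        then show ?thesis using T_mono[of "length w" k] True by auto
      next
        case False
        then have lk: "length w = k" using len by simp
        show ?thesis
        proof (cases k)
          case 0
          then have w0: "w = []" using lk by simp
          have "vv (cnt []) = Rword []" by (simp add: vv_def cnt_def wordof_def concat_map_nil)
          moreover have "cnt [] \<in> Std k" by (simp add: Std_def cnt_def sz_def std_def)
          ultimately show ?thesis unfolding T_def w0 by (metis chr.span_base imageI)
        next
          case (Suc k')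
        have IH: "S (k - 1) \<subseteq> T k" using less.IH[of k'] T_mono[of k' k] Suc by auto
        have 1: "Rword w - vv (cnt w) \<in> T k" using reorder_S[OF w] IH lk by auto
        have 2: "vv (cnt w) \<in> T k" using vv_in_T[OF IH supp_cnt[OF w]] sz_cnt[OF w] lk by simp
        show ?thesis using T_add[OF 1 2] by simp
        qed
      qed
    qed
  qed
qed


definition rk :: "mon \<times> der \<Rightarrow> nat \<times> nat \<times> nat \<times> nat \<times> nat \<times> nat" where
  "rk K = (case K of ((a1,a2,a3,d),(i,j,k)) \<Rightarrow> (i,j,k,a3,a2,a1))"
definition t0 :: "mon \<times> der \<Rightarrow> bool" where
  "t0 K = (case K of ((a1,a2,a3,d),e) \<Rightarrow> d = 0)"
definition Top :: "chr \<Rightarrow> mon \<times> der \<Rightarrow> bool" where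
  "Top f K \<longleftrightarrow> (\<forall>L. t0 L \<and> rk K < rk L \<longrightarrow> f L = 0)"

definition sh :: "nat \<Rightarrow> mon \<times> der \<Rightarrow> mon \<times> der" where
  "sh n K = (case K of ((a1,a2,a3,d),(i,j,k)) \<Rightarrow>
     if n = 1 then ((a1+1,a2,a3,d),(i,j,k))
     else if n = 2 then ((a1,a2+1,a3,d),(i,j,k))
     else if n = 3 then ((a1,a2,a3+1,d),(i,j,k))
     else if n = 4 then ((a1,a2+1,a3,d),(i+1,j,k))
     else if n = 5 then ((a1,a2,a3+1,d),(i+1,j,k))
     else if n = 6 then ((a1,a2,a3,d),(i+1,j,k))
     else if n = 7 then ((a1,a2,a3+1,d),(i,j+1,k))
     else if n = 8 then ((a1,a2,a3,d),(i,j+1,k))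
     else ((a1,a2,a3,d),(i,j,k+1)))"

lemma t0_sh: "t0 (sh n K) = t0 K"
  by (auto simp: t0_def sh_def split: prod.splits)

lemma TopD: "Top f K \<Longrightarrow> t0 L \<Longrightarrow> rk K < rk L \<Longrightarrow> f L = 0"
  unfolding Top_def by blast

lemma rk_sh_mono: "rk (sh n A) < rk (sh n B) \<longleftrightarrow> rk A < rk B"
  by (auto simp: rk_def sh_def less_prod_def split: prod.splits)
lemma rk_sh_gt: "n \<in> {1..9} \<Longrightarrow> rk A < rk (sh n A)"
  by (auto simp: rk_def sh_def less_prod_def split: prod.splits)

lemma mulx_top:
  assumes "Top f K"
  shows "Top (mulx f) (sh 1 K)" "mulx f (sh 1 K) = f K"
proof -
  show "Top (mulx f) (sh 1 K)" unfolding Top_def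
  proof (intro allI impI)
    fix L :: "mon \<times> der" assume L: "t0 L \<and> rk (sh 1 K) < rk L"
    obtain a1 a2 a3 d i j k where Ld: "L = ((a1,a2,a3,d),(i,j,k))" by (metis prod.exhaust)
    show "mulx f L = 0"
    proof (cases "a1 > 0")
      case False then show ?thesis by (simp add: Ld mulx_def)
    next
      case True
      define L' where "L' = ((a1-1,a2,a3,d),(i,j,k))"
      have LL: "L = sh 1 L'" using True by (simp add: Ld L'_def sh_def)
      have "rk K < rk L'" using L[THEN conjunct2] unfolding LL rk_sh_mono .
      moreover have "t0 L'" using L unfolding LL t0_sh by simp
      ultimately have "f L' = 0" using assms TopD by blast
      then show ?thesis using True by (simp add: Ld mulx_def L'_def)
    qed
  qed
  show "mulx f (sh 1 K) = f K" by (simp add: mulx_def sh_def split: prod.splits)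
qed
lemma muly_top:
  assumes "Top f K"
  shows "Top (muly f) (sh 2 K)" "muly f (sh 2 K) = f K"
proof -
  show "Top (muly f) (sh 2 K)" unfolding Top_def
  proof (intro allI impI)
    fix L :: "mon \<times> der" assume L: "t0 L \<and> rk (sh 2 K) < rk L"
    obtain a1 a2 a3 d i j k where Ld: "L = ((a1,a2,a3,d),(i,j,k))" by (metis prod.exhaust)
    show "muly f L = 0"
    proof (cases "a2 > 0")
      case False then show ?thesis by (simp add: Ld muly_def)
    next
      case True
      define L' where "L' = ((a1,a2-1,a3,d),(i,j,k))"
      have LL: "L = sh 2 L'" using True by (simp add: Ld L'_def sh_def)
      have "rk K < rk L'" using L[THEN conjunct2] unfolding LL rk_sh_mono .
      moreover have "t0 L'" using L unfolding LL t0_sh by simp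
      ultimately have "f L' = 0" using assms TopD by blast
      then show ?thesis using True by (simp add: Ld muly_def L'_def)
    qed
  qed
  show "muly f (sh 2 K) = f K" by (simp add: muly_def sh_def split: prod.splits)
qed
lemma mulz_top:
  assumes "Top f K"
  shows "Top (mulz f) (sh 3 K)" "mulz f (sh 3 K) = f K"
proof -
  show "Top (mulz f) (sh 3 K)" unfolding Top_def
  proof (intro allI impI)
    fix L :: "mon \<times> der" assume L: "t0 L \<and> rk (sh 3 K) < rk L"
    obtain a1 a2 a3 d i j k where Ld: "L = ((a1,a2,a3,d),(i,j,k))" by (metis prod.exhaust)
    show "mulz f L = 0"
    proof (cases "a3 > 0")
      case False then show ?thesis by (simp add: Ld mulz_def)
    next
      case True
      define L' where "L' = ((a1,a2,a3-1,d),(i,j,k))"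
      have LL: "L = sh 3 L'" using True by (simp add: Ld L'_def sh_def)
      have "rk K < rk L'" using L[THEN conjunct2] unfolding LL rk_sh_mono .
      moreover have "t0 L'" using L unfolding LL t0_sh by simp
      ultimately have "f L' = 0" using assms TopD by blast
      then show ?thesis using True by (simp add: Ld mulz_def L'_def)
    qed
  qed
  show "mulz f (sh 3 K) = f K" by (simp add: mulz_def sh_def split: prod.splits)
qed
lemma Dx_top:
  assumes "Top f K" "t0 K"
  shows "Top (Dx f) (sh 6 K)" "Dx f (sh 6 K) = f K"
proof -
  show "Top (Dx f) (sh 6 K)" unfolding Top_def
  proof (intro allI impI)
    fix L :: "mon \<times> der" assume L: "t0 L \<and> rk (sh 6 K) < rk L"
    obtain a1 a2 a3 d i j k where Ld: "L = ((a1,a2,a3,d),(i,j,k))" by (metis prod.exhaust)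
    have "rk K < rk (sh 6 K)" by (rule rk_sh_gt) simp
    also have "\<dots> < rk L" using L by simp
    also have "\<dots> < rk (sh 1 L)" by (rule rk_sh_gt) simp
    finally have "f (sh 1 L) = 0" using assms(1) L TopD t0_sh by metis
    then have z1: "f ((Suc a1,a2,a3,d),(i,j,k)) = 0" by (simp add: Ld sh_def)
    have z2: "f ((a1,a2,a3,d),(i-1,j,k)) = 0" if "i > 0"
    proof -
      define L' where "L' = ((a1,a2,a3,d),(i-1,j,k))"
      have LL: "L = sh 6 L'" using that by (simp add: Ld L'_def sh_def)
      have "rk K < rk L'" using L[THEN conjunct2] unfolding LL rk_sh_mono .
      moreover have "t0 L'" using L unfolding LL t0_sh by simp
      ultimately show "f ((a1,a2,a3,d),(i-1,j,k)) = 0" using assms by (simp add: Top_def L'_def)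
    qed
    show "Dx f L = 0" using z2 by (simp add: Ld Dx_def z1)
  qed
  have "rk K < rk (sh 6 K)" by (rule rk_sh_gt) simp
  also have "\<dots> < rk (sh 1 (sh 6 K))" by (rule rk_sh_gt) simp
  finally have "f (sh 1 (sh 6 K)) = 0" using assms TopD t0_sh by metis
  moreover obtain a1 a2 a3 d i j k where Kd: "K = ((a1,a2,a3,d),(i,j,k))" by (metis prod.exhaust)
  ultimately show "Dx f (sh 6 K) = f K" by (simp add: Dx_def sh_def)
qed
lemma Dy_top:
  assumes "Top f K" "t0 K"
  shows "Top (Dy f) (sh 8 K)" "Dy f (sh 8 K) = f K"
proof -
  show "Top (Dy f) (sh 8 K)" unfolding Top_def
  proof (intro allI impI)
    fix L :: "mon \<times> der" assume L: "t0 L \<and> rk (sh 8 K) < rk L"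
    obtain a1 a2 a3 d i j k where Ld: "L = ((a1,a2,a3,d),(i,j,k))" by (metis prod.exhaust)
    have "rk K < rk (sh 8 K)" by (rule rk_sh_gt) simp
    also have "\<dots> < rk L" using L by simp
    also have "\<dots> < rk (sh 2 L)" by (rule rk_sh_gt) simp
    finally have "f (sh 2 L) = 0" using assms(1) L TopD t0_sh by metis
    then have z1: "f ((a1,Suc a2,a3,d),(i,j,k)) = 0" by (simp add: Ld sh_def)
    have z2: "f ((a1,a2,a3,d),(i,j-1,k)) = 0" if "j > 0"
    proof -
      define L' where "L' = ((a1,a2,a3,d),(i,j-1,k))"
      have LL: "L = sh 8 L'" using that by (simp add: Ld L'_def sh_def)
      have "rk K < rk L'" using L[THEN conjunct2] unfolding LL rk_sh_mono .
      moreover have "t0 L'" using L unfolding LL t0_sh by simp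
      ultimately show "f ((a1,a2,a3,d),(i,j-1,k)) = 0" using assms by (simp add: Top_def L'_def)
    qed
    show "Dy f L = 0" using z2 by (simp add: Ld Dy_def z1)
  qed
  have "rk K < rk (sh 8 K)" by (rule rk_sh_gt) simp
  also have "\<dots> < rk (sh 2 (sh 8 K))" by (rule rk_sh_gt) simp
  finally have "f (sh 2 (sh 8 K)) = 0" using assms TopD t0_sh by metis
  moreover obtain a1 a2 a3 d i j k where Kd: "K = ((a1,a2,a3,d),(i,j,k))" by (metis prod.exhaust)
  ultimately show "Dy f (sh 8 K) = f K" by (simp add: Dy_def sh_def)
qed
lemma Dz_top:
  assumes "Top f K" "t0 K"
  shows "Top (Dz f) (sh 9 K)" "Dz f (sh 9 K) = f K"
proof -
  show "Top (Dz f) (sh 9 K)" unfolding Top_def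
  proof (intro allI impI)
    fix L :: "mon \<times> der" assume L: "t0 L \<and> rk (sh 9 K) < rk L"
    obtain a1 a2 a3 d i j k where Ld: "L = ((a1,a2,a3,d),(i,j,k))" by (metis prod.exhaust)
    have "rk K < rk (sh 9 K)" by (rule rk_sh_gt) simp
    also have "\<dots> < rk L" using L by simp
    also have "\<dots> < rk (sh 3 L)" by (rule rk_sh_gt) simp
    finally have "f (sh 3 L) = 0" using assms(1) L TopD t0_sh by metis
    then have z1: "f ((a1,a2,Suc a3,d),(i,j,k)) = 0" by (simp add: Ld sh_def)
    have z2: "f ((a1,a2,a3,d),(i,j,k-1)) = 0" if "k > 0"
    proof -
      define L' where "L' = ((a1,a2,a3,d),(i,j,k-1))"
      have LL: "L = sh 9 L'" using that by (simp add: Ld L'_def sh_def)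
      have "rk K < rk L'" using L[THEN conjunct2] unfolding LL rk_sh_mono .
      moreover have "t0 L'" using L unfolding LL t0_sh by simp
      ultimately show "f ((a1,a2,a3,d),(i,j,k-1)) = 0" using assms by (simp add: Top_def L'_def)
    qed
    show "Dz f L = 0" using z2 by (simp add: Ld Dz_def z1)
  qed
  have "rk K < rk (sh 9 K)" by (rule rk_sh_gt) simp
  also have "\<dots> < rk (sh 3 (sh 9 K))" by (rule rk_sh_gt) simp
  finally have "f (sh 3 (sh 9 K)) = 0" using assms TopD t0_sh by metis
  moreover obtain a1 a2 a3 d i j k where Kd: "K = ((a1,a2,a3,d),(i,j,k))" by (metis prod.exhaust)
  ultimately show "Dz f (sh 9 K) = f K" by (simp add: Dz_def sh_def)
qed


lemma mult_t0: "t0 L \<Longrightarrow> mult g L = 0"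
  by (auto simp: t0_def mult_def split: prod.splits)

lemma top2:
  assumes g: "Top g Kg" and h: "Top h Kh" and lt: "rk Kh < rk Kg" and t: "t0 Kg"
    and phi: "\<And>m. \<phi> m = c * h m + g m"
  shows "Top \<phi> Kg \<and> \<phi> Kg = g Kg"
proof
  show "Top \<phi> Kg" unfolding Top_def
  proof (intro allI impI)
    fix L assume L: "t0 L \<and> rk Kg < rk L"
    have "g L = 0" using TopD[OF g, of L] L by blast
    moreover have "h L = 0" using TopD[OF h, of L] L lt by (meson less_trans)
    ultimately show "\<phi> L = 0" by (simp add: phi)
  qed
  have "h Kg = 0" using TopD[OF h t lt] .
  then show "\<phi> Kg = g Kg" by (simp add: phi)
qed

lemma top_mult:
  assumes g: "Top g K" and t: "t0 K"
    and phi: "\<And>m. \<phi> m = 2 * mult h m + g m"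
  shows "Top \<phi> K \<and> \<phi> K = g K"
proof
  show "Top \<phi> K" unfolding Top_def
  proof (intro allI impI)
    fix L assume L: "t0 L \<and> rk K < rk L"
    then have "g L = 0" "mult h L = 0" using TopD[OF g] mult_t0 by auto
    then show "\<phi> L = 0" by (simp add: phi)
  qed
  show "\<phi> K = g K" using mult_t0[OF t] by (simp add: phi)
qed

lemma sh_comp: "sh 2 (sh 6 K) = sh 4 K" "sh 3 (sh 6 K) = sh 5 K" "sh 3 (sh 8 K) = sh 7 K"
  by (auto simp: sh_def split: prod.splits)

lemma rk_cmp: "rk (sh 1 (sh 8 K)) < rk (sh 4 K)" "rk (sh 1 (sh 9 K)) < rk (sh 5 K)" "rk (sh 2 (sh 9 K)) < rk (sh 7 K)"
  by (auto simp: sh_def rk_def less_prod_def split: prod.splits)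

lemma R_top:
  assumes a: "a \<in> {1..9}" and f: "Top f K" and t: "t0 K"
  shows "Top (R a f) (sh a K) \<and> R a f (sh a K) = f K"
proof -
  have t': "\<And>n. t0 (sh n K)" using t by (simp add: t0_sh)
  have t'': "\<And>n m. t0 (sh n (sh m K))" using t by (simp add: t0_sh)
  show ?thesis using one_nine_cases[OF a]
  proof (elim disjE)
    assume "a = 1" then show ?thesis
      using top_mult[OF mulx_top(1)[OF f] t', of "R 1 f" "Dx f"] mulx_top(2)[OF f] by (simp add: R_def)
  next
    assume "a = 2" then show ?thesis
      using top_mult[OF muly_top(1)[OF f] t', of "R 2 f" "Dy f"] muly_top(2)[OF f] by (simp add: R_def)
  next
    assume "a = 3" then show ?thesis
      using top_mult[OF mulz_top(1)[OF f] t', of "R 3 f" "Dz f"] mulz_top(2)[OF f] by (simp add: R_def)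
  next
    assume a4: "a = 4"
    have g: "Top (muly (Dx f)) (sh 4 K)" "muly (Dx f) (sh 4 K) = f K"
      using muly_top[OF Dx_top(1)[OF f t]] Dx_top(2)[OF f t] by (simp_all add: sh_comp)
    have h: "Top (mulx (Dy f)) (sh 1 (sh 8 K))"
      using mulx_top[OF Dy_top(1)[OF f t]] by simp
    show ?thesis using top2[OF g(1) h rk_cmp(1) t', of "R 4 f" "-1"] g(2) a4 by (simp add: R_def)
  next
    assume a5: "a = 5"
    have g: "Top (mulz (Dx f)) (sh 5 K)" "mulz (Dx f) (sh 5 K) = f K"
      using mulz_top[OF Dx_top(1)[OF f t]] Dx_top(2)[OF f t] by (simp_all add: sh_comp)
    have h: "Top (mulx (Dz f)) (sh 1 (sh 9 K))"
      using mulx_top[OF Dz_top(1)[OF f t]] by simp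
    show ?thesis using top2[OF g(1) h rk_cmp(2) t', of "R 5 f" "-1"] g(2) a5 by (simp add: R_def)
  next
    assume "a = 6" then show ?thesis using Dx_top[OF f t] by (simp add: R_def)
  next
    assume a7: "a = 7"
    have g: "Top (mulz (Dy f)) (sh 7 K)" "mulz (Dy f) (sh 7 K) = f K"
      using mulz_top[OF Dy_top(1)[OF f t]] Dy_top(2)[OF f t] by (simp_all add: sh_comp)
    have h: "Top (muly (Dz f)) (sh 2 (sh 9 K))"
      using muly_top[OF Dz_top(1)[OF f t]] by simp
    show ?thesis using top2[OF g(1) h rk_cmp(3) t', of "R 7 f" "-1"] g(2) a7 by (simp add: R_def)
  next
    assume "a = 8" then show ?thesis using Dy_top[OF f t] by (simp add: R_def)
  next
    assume "a = 9" then show ?thesis using Dz_top[OF f t] by (simp add: R_def)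
  qed
qed


definition K0 :: "mon \<times> der" where "K0 = ((0,0,0,0),(0,0,0))"

definition kc :: "nat list \<Rightarrow> mon \<times> der" where
  "kc w = (let c = count_list w in
     ((c 1, c 2 + c 4, c 3 + c 5 + c 7, 0), (c 6 + c 4 + c 5, c 8 + c 7, c 9)))"

lemma U_top: "Top U_chr K0 \<and> U_chr K0 = 1"
  by (auto simp: Top_def U_chr_def K0_def)

lemma kc_cons: "a \<in> {1..9} \<Longrightarrow> kc (a # w) = sh a (kc w)"
  by (drule one_nine_cases) (auto simp: kc_def sh_def Let_def)

lemma Rword_top: "set w \<subseteq> {1..9} \<Longrightarrow> Top (Rword w) (kc w) \<and> Rword w (kc w) = 1 \<and> t0 (kc w)"
proof (induction w)
  case Nil
  have "kc [] = K0" by (simp add: kc_def K0_def)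
  then show ?case using U_top by (simp add: Rword_def t0_def K0_def)
next
  case (Cons a w)
  then have a: "a \<in> {1..9}" and IH: "Top (Rword w) (kc w) \<and> Rword w (kc w) = 1 \<and> t0 (kc w)" by auto
  show ?case using R_top[OF a IH[THEN conjunct1] IH[THEN conjunct2, THEN conjunct2]] IH
    by (simp add: kc_cons[OF a] t0_sh)
qed

lemma count_list_concat: "count_list (concat xs) i = sum_list (map (\<lambda>x. count_list x i) xs)"
  by (induct xs) auto

lemma count_list_replicate': "count_list (replicate n x) y = (if x = y then n else 0)"
  by (induct n) auto

lemma count_list_wordof: "count_list (wordof e) i = (if i \<in> {1..9} then e i else 0)"
proof -
  have "count_list (wordof e) i = sum_list (map (\<lambda>j. if j = i then e j else 0) [1..<10])"
    by (simp add: wordof_def count_list_concat count_list_replicate' comp_def)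
  also have "\<dots> = (\<Sum>j\<in>{1..<10}. if j = i then e j else 0)"
    by (simp add: sum_list_distinct_conv_sum_set)
  also have "\<dots> = (if i \<in> {1..<10} then e i else 0)" by (simp add: sum.delta')
  finally show ?thesis by auto
qed

lemma kc_wordof: "kc (wordof e) = ((e 1, e 2 + e 4, e 3 + e 5 + e 7, 0), (e 6 + e 4 + e 5, e 8 + e 7, e 9))"
  by (simp add: kc_def count_list_wordof Let_def)

lemma inj_aux:
  fixes x2 x3 x4 x5 x6 x7 x8 y2 y3 y4 y5 y6 y7 y8 :: nat
  assumes sx: "\<not>(0<x6 \<and> 0<x2)" "\<not>(0<x6 \<and> 0<x3)" "\<not>(0<x8 \<and> 0<x3)" "\<not>(0<x2 \<and> 0<x5)" "\<not>(0<x6 \<and> 0<x7)"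
    and sy: "\<not>(0<y6 \<and> 0<y2)" "\<not>(0<y6 \<and> 0<y3)" "\<not>(0<y8 \<and> 0<y3)" "\<not>(0<y2 \<and> 0<y5)" "\<not>(0<y6 \<and> 0<y7)"
    and e: "x2 + x4 = y2 + y4" "x3 + x5 + x7 = y3 + y5 + y7" "x6 + x4 + x5 = y6 + y4 + y5" "x8 + x7 = y8 + y7"
  shows "x2 = y2 \<and> x3 = y3 \<and> x4 = y4 \<and> x5 = y5 \<and> x6 = y6 \<and> x7 = y7 \<and> x8 = y8"
proof -
  have X1: "0 < x6 \<longleftrightarrow> x6 + x4 + x5 > (x2 + x4) + (x3 + x5 + x7)" using sx by auto
  have Y1: "0 < y6 \<longleftrightarrow> y6 + y4 + y5 > (y2 + y4) + (y3 + y5 + y7)" using sy by auto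
  have X2: "x6 = 0 \<Longrightarrow> 0 < x2 \<longleftrightarrow> x2 + x4 > x6 + x4 + x5" using sx by auto
  have Y2: "y6 = 0 \<Longrightarrow> 0 < y2 \<longleftrightarrow> y2 + y4 > y6 + y4 + y5" using sy by auto
  have X3: "x6 = 0 \<Longrightarrow> 0 < x2 \<Longrightarrow> x4 = x6 + x4 + x5 \<and> x5 = 0" using sx by auto
  have Y3: "y6 = 0 \<Longrightarrow> 0 < y2 \<Longrightarrow> y4 = y6 + y4 + y5 \<and> y5 = 0" using sy by auto
  have X4: "x6 = 0 \<Longrightarrow> x2 = 0 \<Longrightarrow> x4 = x2 + x4 \<and> x5 = (x6 + x4 + x5) - (x2 + x4)" using sx by auto
  have Y4: "y6 = 0 \<Longrightarrow> y2 = 0 \<Longrightarrow> y4 = y2 + y4 \<and> y5 = (y6 + y4 + y5) - (y2 + y4)" using sy by auto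
  have X5: "x6 = 0 \<Longrightarrow> 0 < x3 \<longleftrightarrow> (x3 + x5 + x7) - x5 > x8 + x7" using sx by auto
  have Y5: "y6 = 0 \<Longrightarrow> 0 < y3 \<longleftrightarrow> (y3 + y5 + y7) - y5 > y8 + y7" using sy by auto
  have X6: "0 < x6 \<Longrightarrow> x2 = 0 \<and> x3 = 0 \<and> x7 = 0" using sx by auto
  have Y6: "0 < y6 \<Longrightarrow> y2 = 0 \<and> y3 = 0 \<and> y7 = 0" using sy by auto
  have X7: "x6 = 0 \<Longrightarrow> 0 < x3 \<Longrightarrow> x8 = 0" using sx by auto
  have Y7: "y6 = 0 \<Longrightarrow> 0 < y3 \<Longrightarrow> y8 = 0" using sy by auto
  have "0 < x6 \<longleftrightarrow> y6 + y4 + y5 > (y2 + y4) + (y3 + y5 + y7)" using X1 unfolding e .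
  then have c6: "0 < x6 \<longleftrightarrow> 0 < y6" using Y1 by simp
  show ?thesis
  proof (cases "0 < x6")
    case True
    then have "0 < y6" using c6 by simp
    then show ?thesis using True X6 Y6 e by auto
  next
    case False
    then have x6: "x6 = 0" and y6: "y6 = 0" using c6 by auto
    have c2: "0 < x2 \<longleftrightarrow> 0 < y2" using X2[OF x6] Y2[OF y6] e x6 y6 by simp
    have 45: "x4 = y4 \<and> x5 = y5 \<and> x2 = y2"
    proof (cases "0 < x2")
      case True then have "0 < y2" using c2 by simp
      then show ?thesis using X3[OF x6 True] Y3[OF y6] e x6 y6 by auto
    next
      case False then have "x2 = 0" "y2 = 0" using c2 by auto
      then show ?thesis using X4[OF x6] Y4[OF y6] e x6 y6 by auto
    qed
    have c3: "0 < x3 \<longleftrightarrow> 0 < y3" using X5[OF x6] Y5[OF y6] e 45 by simp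
    show ?thesis
    proof (cases "0 < x3")
      case True then have "0 < y3" using c3 by simp
      then show ?thesis using X7[OF x6 True] Y7[OF y6] e 45 x6 y6 by auto
    next
      case False then have "x3 = 0" "y3 = 0" using c3 by auto
      then show ?thesis using e 45 x6 y6 by auto
    qed
  qed
qed

lemma kc_inj:
  assumes "e \<in> Std k" "e' \<in> Std k" "kc (wordof e) = kc (wordof e')"
  shows "e = e'"
proof -
  have s: "std e" "std e'" and z: "\<forall>i. i \<notin> {1..9} \<longrightarrow> e i = 0" "\<forall>i. i \<notin> {1..9} \<longrightarrow> e' i = 0"
    using assms(1,2) by (auto simp: Std_def)
  have eqs: "e 1 = e' 1" "e 2 + e 4 = e' 2 + e' 4" "e 3 + e 5 + e 7 = e' 3 + e' 5 + e' 7"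
     "e 6 + e 4 + e 5 = e' 6 + e' 4 + e' 5" "e 8 + e 7 = e' 8 + e' 7" "e 9 = e' 9"
    using assms(3) by (simp_all add: kc_wordof)
  have "e 2 = e' 2 \<and> e 3 = e' 3 \<and> e 4 = e' 4 \<and> e 5 = e' 5 \<and> e 6 = e' 6 \<and> e 7 = e' 7 \<and> e 8 = e' 8"
    using s eqs(2-5) unfolding std_def by (intro inj_aux) auto
  then have "e i = e' i" if "i \<in> {1..9}" for i
    using one_nine_cases[OF that] eqs by auto
  then show ?thesis using z by (auto simp: fun_eq_iff) (metis)
qed

lemma Std_finite_aux: "finite {e :: nat \<Rightarrow> nat. (\<forall>i. i \<notin> {1..9} \<longrightarrow> e i = 0) \<and> (\<forall>i. e i \<le> k)}"
proof -
  have "{e :: nat \<Rightarrow> nat. (\<forall>i. i \<notin> {1..9} \<longrightarrow> e i = 0) \<and> (\<forall>i. e i \<le> k)} \<subseteq>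
     {f. \<forall>x. (x \<in> {1..9} \<longrightarrow> f x \<in> {0..k}) \<and> (x \<notin> {1..9} \<longrightarrow> f x = 0)}"
    by auto
  moreover have "finite {f. \<forall>x. (x \<in> {1..9::nat} \<longrightarrow> f x \<in> {0..k::nat}) \<and> (x \<notin> {1..9} \<longrightarrow> f x = 0)}"
    by (intro finite_set_of_finite_funs) auto
  ultimately show ?thesis by (rule finite_subset)
qed

lemma sum_apply': "(\<Sum>v\<in>t. (f v :: chr)) x = (\<Sum>v\<in>t. f v x)"
  by (induction t rule: infinite_finite_induct) auto

lemma Std_finite: "finite (Std k)"
proof -
  have "Std k \<subseteq> {e :: nat \<Rightarrow> nat. (\<forall>i. i \<notin> {1..9} \<longrightarrow> e i = 0) \<and> (\<forall>i. e i \<le> k)}"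
  proof safe
    fix e i assume e: "e \<in> Std k"
    show "i \<notin> {1..9} \<Longrightarrow> e i = 0" using e by (auto simp: Std_def)
    show "e i \<le> k"
    proof (cases "i \<in> {1..9}")
      case True
      then have "e i \<le> sz e" unfolding sz_def by (intro member_le_sum) auto
      then show ?thesis using e by (auto simp: Std_def)
    next
      case False then show ?thesis using e by (auto simp: Std_def)
    qed
  qed
  then show ?thesis using Std_finite_aux finite_subset by blast
qed


lemma indep_lead:
  assumes fin: "finite F"
    and top: "\<And>f. f \<in> F \<Longrightarrow> Top f (\<kappa> f) \<and> f (\<kappa> f) \<noteq> 0 \<and> t0 (\<kappa> f)"
    and inj: "\<And>f g. f \<in> F \<Longrightarrow> g \<in> F \<Longrightarrow> rk (\<kappa> f) = rk (\<kappa> g) \<Longrightarrow> f = g"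
  shows "chr.independent F"
proof
  assume "chr.dependent F"
  then obtain t u where t: "finite t" "t \<subseteq> F" and sum0: "(\<Sum>v\<in>t. chr_scale (u v) v) = 0"
    and nz: "\<exists>v\<in>t. u v \<noteq> 0"
    unfolding chr.dependent_explicit by blast
  define t' where "t' = {v \<in> t. u v \<noteq> 0}"
  have t'fin: "finite t'" and t'ne: "t' \<noteq> {}" using t nz by (auto simp: t'_def)
  define M where "M = Max (rk ` \<kappa> ` t')"
  have "M \<in> rk ` \<kappa> ` t'" unfolding M_def using t'fin t'ne by (intro Max_in) auto
  then obtain v0 where v0: "v0 \<in> t'" "rk (\<kappa> v0) = M" by auto
  have le: "rk (\<kappa> v) \<le> M" if "v \<in> t'" for v unfolding M_def using t'fin that by (intro Max_ge) auto
  have v0F: "v0 \<in> F" using v0 t by (auto simp: t'_def)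
  have zero: "chr_scale (u v) v (\<kappa> v0) = 0" if "v \<in> t" "v \<noteq> v0" for v
  proof (cases "u v = 0")
    case True then show ?thesis by (simp add: chr_scale_def)
  next
    case False
    then have vt': "v \<in> t'" using that by (simp add: t'_def)
    have vF: "v \<in> F" using that t by auto
    have "rk (\<kappa> v) \<noteq> rk (\<kappa> v0)" using inj[OF vF v0F] that by auto
    then have "rk (\<kappa> v) < rk (\<kappa> v0)" using le[OF vt'] v0 by auto
    then have "v (\<kappa> v0) = 0" using TopD top[OF vF] top[OF v0F] by blast
    then show ?thesis by (simp add: chr_scale_def)
  qed
  have "0 = (\<Sum>v\<in>t. chr_scale (u v) v) (\<kappa> v0)" using sum0 by simp
  also have "\<dots> = (\<Sum>v\<in>t. chr_scale (u v) v (\<kappa> v0))" by (rule sum_apply')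
  also have "\<dots> = chr_scale (u v0) v0 (\<kappa> v0) + (\<Sum>v\<in>t - {v0}. chr_scale (u v) v (\<kappa> v0))"
    using v0 t by (intro sum.remove) (auto simp: t'_def)
  also have "\<dots> = chr_scale (u v0) v0 (\<kappa> v0)"
    using zero by (simp add: sum.neutral)
  also have "\<dots> \<noteq> 0" using v0 top[OF v0F] by (simp add: chr_scale_def t'_def)
  finally show False by simp
qed


lemma T_sub_S: "T k \<subseteq> S k"
  unfolding T_def
proof (rule chr.span_minimal)
  show "chr.subspace (S k)" by (rule S_sub)
  show "vv ` Std k \<subseteq> S k"
  proof
    fix f assume "f \<in> vv ` Std k"
    then obtain e where e: "e \<in> Std k" "f = vv e" by blast
    have "length (wordof e) \<le> k" using e(1) length_wordof[of e] by (simp add: Std_def)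
    then show "f \<in> S k" unfolding e(2) vv_def using Rword_in_S set_wordof by blast
  qed
qed

lemma dim_S: "chr.dim (S k) = card (Std k)"
proof -
  have SeqT: "S k = T k" using S_sub_T T_sub_S by blast
  define ch where "ch f = (SOME e. e \<in> Std k \<and> vv e = f)" for f
  have ch: "ch f \<in> Std k \<and> vv (ch f) = f" if fin: "f \<in> vv ` Std k" for f
  proof -
    obtain e where "e \<in> Std k" "vv e = f" using fin by blast
    then show ?thesis unfolding ch_def by (intro someI_ex[of "\<lambda>x. x \<in> Std k \<and> vv x = f"]) blast
  qed
  have indep: "chr.independent (vv ` Std k)"
  proof (rule indep_lead[where \<kappa> = "\<lambda>f. kc (wordof (ch f))"])
    show "finite (vv ` Std k)" using Std_finite by simp
  next
    fix f assume f: "f \<in> vv ` Std k"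
    have "Top (vv (ch f)) (kc (wordof (ch f))) \<and> vv (ch f) (kc (wordof (ch f))) = 1 \<and> t0 (kc (wordof (ch f)))"
      using Rword_top[OF set_wordof[of "ch f"]] by (simp add: vv_def)
    then show "Top f (kc (wordof (ch f))) \<and> f (kc (wordof (ch f))) \<noteq> 0 \<and> t0 (kc (wordof (ch f)))"
      using ch[OF f] by simp
  next
    fix f g assume f: "f \<in> vv ` Std k" and g: "g \<in> vv ` Std k"
      and eq: "rk (kc (wordof (ch f))) = rk (kc (wordof (ch g)))"
    have "kc (wordof (ch f)) = kc (wordof (ch g))"
      using eq unfolding kc_wordof rk_def by simp
    then have "ch f = ch g" using kc_inj ch[OF f] ch[OF g] by blast
    then show "f = g" using ch[OF f] ch[OF g] by metis
  qed
  have injv: "inj_on vv (Std k)"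
  proof (rule inj_onI)
    fix e e' assume e: "e \<in> Std k" "e' \<in> Std k" "vv e = vv e'"
    have A: "Top (vv e) (kc (wordof e)) \<and> vv e (kc (wordof e)) = 1 \<and> t0 (kc (wordof e))"
      using Rword_top[OF set_wordof[of e]] by (simp add: vv_def)
    have B: "Top (vv e') (kc (wordof e')) \<and> vv e' (kc (wordof e')) = 1 \<and> t0 (kc (wordof e'))"
      using Rword_top[OF set_wordof[of e']] by (simp add: vv_def)
    have "\<not> rk (kc (wordof e)) < rk (kc (wordof e'))"
    proof
      assume "rk (kc (wordof e)) < rk (kc (wordof e'))"
      then have "vv e (kc (wordof e')) = 0" using TopD A B by blast
      then show False using B e(3) by simp
    qed
    moreover have "\<not> rk (kc (wordof e')) < rk (kc (wordof e))"
    proof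
      assume "rk (kc (wordof e')) < rk (kc (wordof e))"
      then have "vv e' (kc (wordof e)) = 0" using TopD A B by blast
      then show False using A e(3) by simp
    qed
    ultimately have "rk (kc (wordof e)) = rk (kc (wordof e'))" by auto
    then have "kc (wordof e) = kc (wordof e')" by (simp add: kc_wordof rk_def)
    then show "e = e'" using kc_inj e by blast
  qed
  have "chr.dim (S k) = chr.dim (chr.span (vv ` Std k))" using SeqT by (simp add: T_def)
  also have "\<dots> = card (vv ` Std k)" by (rule chr.dim_span_eq_card_independent[OF indep])
  also have "\<dots> = card (Std k)" by (rule card_image[OF injv])
  finally show ?thesis .
qed


definition Bx :: "nat set \<Rightarrow> nat set \<Rightarrow> nat \<Rightarrow> (nat \<Rightarrow> nat) set" where
  "Bx J P n = {e. (\<forall>i. i \<notin> J \<longrightarrow> e i = 0) \<and> sum e J \<le> n \<and> (\<forall>p\<in>P. 1 \<le> e p)}"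

lemma hockey: "(\<Sum>j\<in>{0..n}. (n - j + c) choose c) = (n + Suc c) choose Suc c"
proof -
  have "(\<Sum>j\<in>{0..n}. (n - j + c) choose c) = (\<Sum>j\<in>{0..n}. (n - (n + 0 - j) + c) choose c)"
    by (rule sum.atLeastAtMost_rev)
  also have "\<dots> = (\<Sum>j\<in>{0..n}. (c + j) choose j)"
    by (rule sum.cong) (auto simp: binomial_symmetric[of c] add.commute)
  also have "\<dots> = (\<Sum>j\<le>n. (c + j) choose j)" by (simp add: atLeast0AtMost)
  also have "\<dots> = Suc (c + n) choose n" by (rule sum_choose_lower)
  also have "\<dots> = (n + Suc c) choose Suc c"
    using binomial_symmetric[of n "Suc (c + n)"] by (simp add: add.commute)
  finally show ?thesis .
qed

lemma card_Bx0: "finite J \<Longrightarrow> card (Bx J {} n) = (n + card J) choose card J"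
proof (induction J arbitrary: n rule: finite_induct)
  case empty
  have "Bx {} {} n = {\<lambda>_. 0}" by (auto simp: Bx_def)
  then show ?case by simp
next
  case (insert a J)
  let ?f = "\<lambda>j e. e(a := j)"
  have eq: "Bx (insert a J) {} n = (\<Union>j\<in>{0..n}. ?f j ` Bx J {} (n - j))"
  proof safe
    fix e assume e: "e \<in> Bx (insert a J) {} n"
    have s: "sum e (insert a J) = e a + sum e J" using insert by simp
    have s2: "sum (e(a := 0)) J = sum e J" using insert(2) by (intro sum.cong) auto
    have "e(a := 0) \<in> Bx J {} (n - e a)"
      using e insert(2) s s2 by (auto simp: Bx_def)
    moreover have "e = ?f (e a) (e(a := 0))" by simp
    moreover have "e a \<in> {0..n}" using e s by (auto simp: Bx_def)
    ultimately show "e \<in> (\<Union>j\<in>{0..n}. ?f j ` Bx J {} (n - j))" by blast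
  next
    fix e j assume j: "j \<in> {0..n}" and e: "e \<in> Bx J {} (n - j)"
    have ea: "e a = 0" using e insert(2) by (auto simp: Bx_def)
    have "sum (e(a := j)) J = sum e J" using insert(2) by (intro sum.cong) auto
    then show "e(a := j) \<in> Bx (insert a J) {} n"
      using e j insert(1,2) by (auto simp: Bx_def)
  qed
  have inj: "inj_on (?f j) (Bx J {} (n - j))" for j
  proof (rule inj_onI)
    fix e e' assume "e \<in> Bx J {} (n - j)" "e' \<in> Bx J {} (n - j)" "e(a := j) = e'(a := j)"
    then show "e = e'" using insert(2) by (auto simp: Bx_def fun_eq_iff) (metis fun_upd_other)
  qed
  have fin: "finite (Bx J {} m)" for m
  proof (rule ccontr)
    assume "infinite (Bx J {} m)"
    then have "card (Bx J {} m) = 0" by simp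
    moreover have "(\<lambda>_. 0) \<in> Bx J {} m" by (simp add: Bx_def)
    ultimately show False using insert.IH[of m] by simp
  qed
  have "card (Bx (insert a J) {} n) = (\<Sum>j\<in>{0..n}. card (?f j ` Bx J {} (n - j)))"
    unfolding eq
  proof (rule card_UN_disjoint)
    show "finite {0..n}" by simp
    show "\<forall>j\<in>{0..n}. finite (?f j ` Bx J {} (n - j))" using fin by simp
    show "\<forall>i\<in>{0..n}. \<forall>j\<in>{0..n}. i \<noteq> j \<longrightarrow> ?f i ` Bx J {} (n - i) \<inter> ?f j ` Bx J {} (n - j) = {}"
      by (auto dest!: fun_cong[where x = a])
  qed
  also have "\<dots> = (\<Sum>j\<in>{0..n}. (n - j + card J) choose card J)"
    using inj insert.IH by (simp add: card_image)
  also have "\<dots> = (n + card (insert a J)) choose card (insert a J)"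
    using hockey insert by simp
  finally show ?case .
qed

lemma card_Bx:
  assumes J: "finite J" and P: "P \<subseteq> J"
  shows "card (Bx J P n) = (n + card J - card P) choose card J"
proof (cases "card P \<le> n")
  case True
  let ?g = "\<lambda>e i. e i + (if i \<in> P then 1 else 0)"
  have sP: "sum (\<lambda>i. if i \<in> P then 1 else 0) J = card P"
    using J P by (simp add: sum.If_cases Int_absorb1)
  have "Bx J P n = ?g ` Bx J {} (n - card P)"
  proof safe
    fix e assume e: "e \<in> Bx J P n"
    let ?h = "\<lambda>i. e i - (if i \<in> P then 1 else 0)"
    have eh: "e = ?g ?h" using e by (auto simp: Bx_def fun_eq_iff)
    have "sum e J = sum ?h J + card P"
      by (subst eh) (simp add: sum.distrib sP)
    then have "?h \<in> Bx J {} (n - card P)" using e P by (auto simp: Bx_def)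
    then show "e \<in> ?g ` Bx J {} (n - card P)" by (intro image_eqI[where x="?h"] eh)
  next
    fix e assume e: "e \<in> Bx J {} (n - card P)"
    have "sum (?g e) J = sum e J + card P" by (simp add: sum.distrib sP)
    then show "?g e \<in> Bx J P n" using e P True by (auto simp: Bx_def)
  qed
  moreover have "inj_on ?g (Bx J {} (n - card P))"
    by (rule inj_onI) (auto simp: fun_eq_iff)
  ultimately have "card (Bx J P n) = card (Bx J {} (n - card P))" by (simp add: card_image)
  also have "\<dots> = (n - card P + card J) choose card J" using card_Bx0[OF J] .
  finally show ?thesis using True by simp
next
  case False
  have "Bx J P n = {}"
  proof safe
    fix e assume e: "e \<in> Bx J P n"
    have "card P = sum (\<lambda>_. 1::nat) P" by simp
    also have "\<dots> \<le> sum e P" using e by (intro sum_mono) (auto simp: Bx_def)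
    also have "\<dots> \<le> sum e J" using J P by (intro sum_mono2) auto
    also have "\<dots> \<le> n" using e by (simp add: Bx_def)
    finally show "e \<in> {}" using False by simp
  qed
  moreover have "n + card J - card P < card J" using False card_mono[OF J P] by linarith
  ultimately show ?thesis by simp
qed


lemma set19: "{1..9::nat} = {1,2,3,4,5,6,7,8,9}" by auto

lemma sum19: "sum e {1..9::nat} = e 1 + e 2 + e 3 + e 4 + e 5 + e 6 + e 7 + e 8 + e 9"
  unfolding set19 by (simp add: add.assoc)

lemma cB: "finite J \<Longrightarrow> P \<subseteq> J \<Longrightarrow> card J = 6 \<Longrightarrow> card P = p \<Longrightarrow> n + 6 - p = q \<Longrightarrow> card (Bx J P n) = q choose 6"
  using card_Bx[of J P n] by (simp only:)

lemma bx_iff: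
  assumes J: "J \<subseteq> {1..9}" and D: "{1..9} - J = D"
  shows "e \<in> Bx J P n \<longleftrightarrow> (\<forall>i. i \<notin> {1..9} \<longrightarrow> e i = 0) \<and> (\<forall>i\<in>D. e i = 0) \<and> sz e \<le> n \<and> (\<forall>p\<in>P. 1 \<le> e p)"
proof -
  have z: "(\<forall>i. i \<notin> J \<longrightarrow> e i = 0) \<longleftrightarrow> (\<forall>i. i \<notin> {1..9} \<longrightarrow> e i = 0) \<and> (\<forall>i\<in>D. e i = 0)"
    using J D by blast
  have s: "(\<forall>i\<in>D. e i = 0) \<Longrightarrow> sum e J = sz e"
    unfolding sz_def using J D by (intro sum.mono_neutral_left) auto
  show ?thesis unfolding Bx_def using z s by auto
qed

lemma Std_part:
  "Std n = Bx {1,4,5,7,8,9} {} n \<union> Bx {1,2,4,7,8,9} {2} n \<union> Bx {1,3,4,5,7,9} {3} n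
     \<union> Bx {1,2,3,4,7,9} {2,3} n \<union> Bx {1,4,5,6,8,9} {6} n"
proof -
  have b1: "e \<in> Bx {1,4,5,7,8,9} {} n \<longleftrightarrow> (\<forall>i. i \<notin> {1..9} \<longrightarrow> e i = 0) \<and> (\<forall>i\<in>{2,3,6}. e i = 0) \<and> sz e \<le> n \<and> (\<forall>p\<in>{}. 1 \<le> e p)" for e
    by (rule bx_iff) (auto simp: set19)
  have b2: "e \<in> Bx {1,2,4,7,8,9} {2} n \<longleftrightarrow> (\<forall>i. i \<notin> {1..9} \<longrightarrow> e i = 0) \<and> (\<forall>i\<in>{3,5,6}. e i = 0) \<and> sz e \<le> n \<and> (\<forall>p\<in>{2}. 1 \<le> e p)" for e
    by (rule bx_iff) (auto simp: set19)
  have b3: "e \<in> Bx {1,3,4,5,7,9} {3} n \<longleftrightarrow> (\<forall>i. i \<notin> {1..9} \<longrightarrow> e i = 0) \<and> (\<forall>i\<in>{2,6,8}. e i = 0) \<and> sz e \<le> n \<and> (\<forall>p\<in>{3}. 1 \<le> e p)" for e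
    by (rule bx_iff) (auto simp: set19)
  have b4: "e \<in> Bx {1,2,3,4,7,9} {2,3} n \<longleftrightarrow> (\<forall>i. i \<notin> {1..9} \<longrightarrow> e i = 0) \<and> (\<forall>i\<in>{5,6,8}. e i = 0) \<and> sz e \<le> n \<and> (\<forall>p\<in>{2,3}. 1 \<le> e p)" for e
    by (rule bx_iff) (auto simp: set19)
  have b5: "e \<in> Bx {1,4,5,6,8,9} {6} n \<longleftrightarrow> (\<forall>i. i \<notin> {1..9} \<longrightarrow> e i = 0) \<and> (\<forall>i\<in>{2,3,7}. e i = 0) \<and> sz e \<le> n \<and> (\<forall>p\<in>{6}. 1 \<le> e p)" for e
    by (rule bx_iff) (auto simp: set19)
  show ?thesis
  proof (rule set_eqI)
    fix e
    show "e \<in> Std n \<longleftrightarrow> e \<in> Bx {1,4,5,7,8,9} {} n \<union> Bx {1,2,4,7,8,9} {2} n \<union> Bx {1,3,4,5,7,9} {3} n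
     \<union> Bx {1,2,3,4,7,9} {2,3} n \<union> Bx {1,4,5,6,8,9} {6} n"
      unfolding Un_iff b1 b2 b3 b4 b5 Std_def mem_Collect_eq std_def
      by (cases "e 2 = 0"; cases "e 3 = 0"; cases "e 6 = 0") auto
  qed
qed

lemma card_Std: "card (Std n) = (n + 6 choose 6) + (n + 5 choose 6) + (n + 5 choose 6) + (n + 4 choose 6) + (n + 5 choose 6)"
proof -
  let ?A1 = "Bx {1,4,5,7,8,9} {} n" and ?A2 = "Bx {1,2,4,7,8,9} {2} n" and ?A3 = "Bx {1,3,4,5,7,9} {3} n"
    and ?A4 = "Bx {1,2,3,4,7,9} {2,3} n" and ?A5 = "Bx {1,4,5,6,8,9} {6} n"
  have c1: "card ?A1 = n + 6 choose 6" by (rule cB[where q = "n + 6"]) auto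
  have c2: "card ?A2 = n + 5 choose 6" by (rule cB[where q = "n + 5"]) auto
  have c3: "card ?A3 = n + 5 choose 6" by (rule cB[where q = "n + 5"]) auto
  have c4: "card ?A4 = n + 4 choose 6" by (rule cB[where q = "n + 4"]) auto
  have c5: "card ?A5 = n + 5 choose 6" by (rule cB[where q = "n + 5"]) auto
  have fin: "finite (Std n)" by (rule Std_finite)
  have f: "finite ?A1" "finite ?A2" "finite ?A3" "finite ?A4" "finite ?A5"
    using fin unfolding Std_part by auto
  have d: "?A1 \<inter> ?A2 = {}" "(?A1 \<union> ?A2) \<inter> ?A3 = {}" "(?A1 \<union> ?A2 \<union> ?A3) \<inter> ?A4 = {}"
     "(?A1 \<union> ?A2 \<union> ?A3 \<union> ?A4) \<inter> ?A5 = {}"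
    by (auto simp: Bx_def)
  show ?thesis unfolding Std_part
    using f d c1 c2 c3 c4 c5 by (simp add: card_Un_disjoint)
qed

lemma ch6: "real (m choose 6) = real m * (real m - 1) * (real m - 2) * (real m - 3) * (real m - 4) * (real m - 5) / 720"
  unfolding binomial_gbinomial gbinomial_altdef_of_nat
  by (simp add: eval_nat_numeral prod.atLeast0_lessThan_Suc field_simps)

lemma final: "real ((n + 6 choose 6) + (n + 5 choose 6) + (n + 5 choose 6) + (n + 4 choose 6) + (n + 5 choose 6))
     = real ((n+4) * (n+3)^2 * (n+2)^2 * (n+1)) / 144"
  unfolding of_nat_add ch6 by (simp add: field_simps power2_eq_square)

theorem mainTheorem1:
  fixes n :: nat
  assumes "n \<ge> 1"
  shows "real (vector_space.dim chr_scale (S n))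
     = real ((n+4) * (n+3)^2 * (n+2)^2 * (n+1)) / 144"
proof -
  have "vector_space.dim chr_scale (S n) = card (Std n)" by (rule dim_S)
  then show ?thesis using card_Std[of n] final[of n] by simp
qed

end
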